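(* Let $k\ge 1$. If there exists a (randomized) online algorithm for the Hydra game on the $k$-factorial tree whose total (expected) cost is at most $R$ against every adversary, then there exists a (randomized) $(R+1)$-competitive online algorithm for the generalized $k$-server problem in uniform metrics.
   Context: Hydra game: played between an online algorithm and an oblivious adversary on a fixed rooted unweighted tree $T$ known in advance. Each node is asleep, alive, or dead; initially the root is alive and all others asleep. In each step the adversary picks an alive node, makes it dead and makes all its children alive. The algorithm must always be at an alive node (initially the root); if its node is killed it moves to an alive node, paying the shortest-path distance in $T$. The game ends when all nodes but one are dead; the cost is the total movement. The $k$-factorial tree is the rooted tree of height $k$ (root at level $k$, leaves at level $0$) in which every node at level $d$ has exactly $d$ children. Generalized $k$-server problem in uniform metrics: given uniform metric spaces $M_1,\dots,M_k$, where $M_i$ has $n_i\ge 2$ points at pairwise distance $1$, server $s_i$ starts at a fixed point of $M_i$ and always stays in $M_i$. Requests arrive online as $k$-tuples $(r_1,\dots,r_k)\in\prod_i M_i$; to serve a request an algorithm moves servers so that $s_i$ is at $r_i$ for at least one $i$, before seeing the next request. The cost is the total distance traveled by all servers. A randomized online algorithm $\mathrm{ALG}$ is $\beta$-competitive if there is a constant $\gamma$ (possibly depending on $k$ and the metrics but not on the request sequence) such that for every input $I$, $\mathbf{E}[\mathrm{ALG}(I)]\le \beta\cdot \mathrm{OPT}(I)+\gamma$, where $\mathrm{OPT}(I)$ is the optimal offline cost. *)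

theory Defs
  imports "HOL-Probability.Probability"
begin

definition path_cost :: "('a \<Rightarrow> 'a \<Rightarrow> nat) \<Rightarrow> 'a list \<Rightarrow> nat" where
  "path_cost d xs = sum_list (map2 d xs (tl xs))"

text \<open>Nodes are encoded by their path from the root: the list of child indices.
  A node at depth j is at level k - j and has exactly k - j children, indexed 0..k-j-1.\<close>
definition ftree :: "nat \<Rightarrow> nat list set" where
  "ftree k = {xs. length xs \<le> k \<and> (\<forall>j < length xs. xs ! j < k - j)}"

definition fchildren :: "nat \<Rightarrow> nat list \<Rightarrow> nat list set" where
  "fchildren k v = {v @ [a] | a. a < k - length v}"

fun lcp_len :: "nat list \<Rightarrow> nat list \<Rightarrow> nat" where
  "lcp_len (x # xs) (y # ys) = (if x = y then Suc (lcp_len xs ys) else 0)"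
| "lcp_len _ _ = 0"

text \<open>Shortest-path distance in the (unweighted) tree: up to the lowest common ancestor and down.\<close>
definition tdist :: "nat list \<Rightarrow> nat list \<Rightarrow> nat" where
  "tdist u v = length u + length v - 2 * lcp_len u v"

definition alive_after :: "nat \<Rightarrow> nat list list \<Rightarrow> nat list set" where
  "alive_after k ks = foldl (\<lambda>A v. (A - {v}) \<union> fchildren k v) {[]} ks"

definition valid_kills :: "nat \<Rightarrow> nat list list \<Rightarrow> bool" where
  "valid_kills k ks = (\<forall>j < length ks. ks ! j \<in> alive_after k (take j ks))"

text \<open>An (oblivious) adversary: a complete legal play, i.e. until all nodes but one are dead.\<close>
definition hydra_adversary :: "nat \<Rightarrow> nat list list \<Rightarrow> bool" where
  "hydra_adversary k ks = (valid_kills k ks \<and> length ks = card (ftree k) - 1)"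

text \<open>A randomized online Hydra algorithm (behavioural strategy): given the kills so far
  (the last of which killed the algorithm's node) and its own positions so far, it chooses
  (randomly) the node to move to; this must be an alive node.\<close>
type_synonym hydra_alg = "nat list list \<Rightarrow> nat list list \<Rightarrow> nat list pmf"

definition valid_hydra_alg :: "nat \<Rightarrow> hydra_alg \<Rightarrow> bool" where
  "valid_hydra_alg k H = (\<forall>ks ps. valid_kills k ks \<and> ks \<noteq> [] \<and> alive_after k ks \<noteq> {}
       \<longrightarrow> set_pmf (H ks ps) \<subseteq> alive_after k ks)"

text \<open>Arguments: kills so far, own positions so far (starting with the root), remaining kills.\<close>
fun hydra_run :: "hydra_alg \<Rightarrow> nat list list \<Rightarrow> nat list list \<Rightarrow> nat list list
                    \<Rightarrow> nat list list pmf" where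
  "hydra_run H past ps [] = return_pmf []"
| "hydra_run H past ps (v # vs) =
     (if v = last ps then
        bind_pmf (H (past @ [v]) ps) (\<lambda>p.
          map_pmf (\<lambda>rest. p # rest) (hydra_run H (past @ [v]) (ps @ [p]) vs))
      else
        map_pmf (\<lambda>rest. last ps # rest) (hydra_run H (past @ [v]) (ps @ [last ps]) vs))"

definition hydra_exp_cost :: "hydra_alg \<Rightarrow> nat list list \<Rightarrow> real" where
  "hydra_exp_cost H ks =
     measure_pmf.expectation (hydra_run H [] [[]] ks) (\<lambda>ps. real (path_cost tdist ([] # ps)))"

text \<open>Metric M_i = {0..<n i} with the uniform metric. Configurations and requests are
  lists of length k whose i-th entry lies in M_i.\<close>
definition gks_point :: "nat \<Rightarrow> (nat \<Rightarrow> nat) \<Rightarrow> nat list \<Rightarrow> bool" where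
  "gks_point k n c = (length c = k \<and> (\<forall>i < k. c ! i < n i))"

definition gks_serves :: "nat \<Rightarrow> nat list \<Rightarrow> nat list \<Rightarrow> bool" where
  "gks_serves k c r = (\<exists>i < k. c ! i = r ! i)"

definition gks_dist :: "nat \<Rightarrow> nat list \<Rightarrow> nat list \<Rightarrow> nat" where
  "gks_dist k c c' = card {i. i < k \<and> c ! i \<noteq> c' ! i}"

text \<open>A randomized online algorithm (behavioural strategy): given the requests so far
  (including the current one) and its previous configurations (starting with the initial
  one), it chooses (randomly) its new configuration, which must serve the current request.\<close>
type_synonym gks_alg = "nat list list \<Rightarrow> nat list list \<Rightarrow> nat list pmf"

definition valid_gks_alg :: "nat \<Rightarrow> (nat \<Rightarrow> nat) \<Rightarrow> gks_alg \<Rightarrow> bool" where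
  "valid_gks_alg k n A = (\<forall>rs cs. rs \<noteq> [] \<and> (\<forall>r \<in> set rs. gks_point k n r) \<longrightarrow>
       set_pmf (A rs cs) \<subseteq> {c. gks_point k n c \<and> gks_serves k c (last rs)})"

fun gks_run :: "gks_alg \<Rightarrow> nat list list \<Rightarrow> nat list list \<Rightarrow> nat list list
                  \<Rightarrow> nat list list pmf" where
  "gks_run A past cs [] = return_pmf []"
| "gks_run A past cs (r # rs) =
     bind_pmf (A (past @ [r]) cs) (\<lambda>c.
       map_pmf (\<lambda>rest. c # rest) (gks_run A (past @ [r]) (cs @ [c]) rs))"

definition gks_exp_cost :: "nat \<Rightarrow> gks_alg \<Rightarrow> nat list \<Rightarrow> nat list list \<Rightarrow> real" where
  "gks_exp_cost k A c0 I =
     measure_pmf.expectation (gks_run A [] [c0] I) (\<lambda>cs. real (path_cost (gks_dist k) (c0 # cs)))"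

definition gks_opt :: "nat \<Rightarrow> (nat \<Rightarrow> nat) \<Rightarrow> nat list \<Rightarrow> nat list list \<Rightarrow> nat" where
  "gks_opt k n c0 I =
     (INF cs \<in> {cs. length cs = length I \<and>
                    (\<forall>j < length I. gks_point k n (cs ! j) \<and> gks_serves k (cs ! j) (I ! j))}.
        path_cost (gks_dist k) (c0 # cs))"

definition gks_competitive ::
  "nat \<Rightarrow> (nat \<Rightarrow> nat) \<Rightarrow> nat list \<Rightarrow> gks_alg \<Rightarrow> real \<Rightarrow> bool" where
  "gks_competitive k n c0 A \<beta> =
     (\<exists>\<gamma>::real. \<forall>I. (\<forall>r \<in> set I. gks_point k n r) \<longrightarrow>
        gks_exp_cost k A c0 I \<le> \<beta> * real (gks_opt k n c0 I) + \<gamma>)"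

end

theory Submission
  imports Defs
begin

definition ch :: "nat \<Rightarrow> nat list set \<Rightarrow> nat list set" where
  "ch k S = (\<Union>v\<in>S. fchildren k v)"

definition created :: "nat \<Rightarrow> nat list list \<Rightarrow> nat list set" where
  "created k ks = {[]} \<union> set ks \<union> ch k (set ks)"

lemma alive_after_Nil[simp]: "alive_after k [] = {[]}"
  by (simp add: alive_after_def)

lemma alive_after_snoc: "alive_after k (xs @ [v]) = (alive_after k xs - {v}) \<union> fchildren k v"
  by (simp add: alive_after_def)

lemma valid_kills_Nil[simp]: "valid_kills k []"
  by (simp add: valid_kills_def)

lemma valid_kills_snoc: "valid_kills k (xs @ [v]) \<longleftrightarrow> valid_kills k xs \<and> v \<in> alive_after k xs"
proof
  assume a: "valid_kills k (xs @ [v])"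
  have "\<forall>j<length xs. xs ! j \<in> alive_after k (take j xs)"
  proof (intro allI impI)
    fix j assume "j < length xs"
    with a[unfolded valid_kills_def, rule_format, of j] show "xs ! j \<in> alive_after k (take j xs)"
      by (simp add: nth_append)
  qed
  moreover have "v \<in> alive_after k xs"
    using a[unfolded valid_kills_def, rule_format, of "length xs"] by simp
  ultimately show "valid_kills k xs \<and> v \<in> alive_after k xs" by (simp add: valid_kills_def)
next
  assume a: "valid_kills k xs \<and> v \<in> alive_after k xs"
  show "valid_kills k (xs @ [v])"
    unfolding valid_kills_def
  proof (intro allI impI)
    fix j assume "j < length (xs @ [v])"
    then consider "j < length xs" | "j = length xs" by fastforce
    then show "(xs @ [v]) ! j \<in> alive_after k (take j (xs @ [v]))"
    proof cases
      case 1 then show ?thesis using a by (simp add: nth_append valid_kills_def)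
    next
      case 2 then show ?thesis using a by simp
    qed
  qed
qed

lemma valid_kills_append: "valid_kills k (xs @ ys) \<Longrightarrow> valid_kills k xs"
proof (induction ys rule: rev_induct)
  case (snoc y ys) then show ?case using valid_kills_snoc[of k "xs @ ys" y] by simp
qed simp

lemma fchildren_butlast: "u \<in> fchildren k v \<Longrightarrow> butlast u = v \<and> u \<noteq> [] \<and> length u = Suc (length v)"
  by (auto simp: fchildren_def)

lemma ch_mem: "u \<in> ch k S \<longleftrightarrow> u \<noteq> [] \<and> butlast u \<in> S \<and> last u < k - length (butlast u)"
proof
  assume "u \<in> ch k S"
  then obtain v a where "v \<in> S" "u = v @ [a]" "a < k - length v" by (auto simp: ch_def fchildren_def)
  then show "u \<noteq> [] \<and> butlast u \<in> S \<and> last u < k - length (butlast u)" by simp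
next
  assume a: "u \<noteq> [] \<and> butlast u \<in> S \<and> last u < k - length (butlast u)"
  then have "u = butlast u @ [last u]" by simp
  with a show "u \<in> ch k S" unfolding ch_def fchildren_def by blast
qed

lemma ch_union: "ch k (A \<union> B) = ch k A \<union> ch k B"
  by (auto simp: ch_def)

lemma ch_insert: "ch k (insert v A) = fchildren k v \<union> ch k A"
  by (auto simp: ch_def)

lemma ch_mono: "A \<subseteq> B \<Longrightarrow> ch k A \<subseteq> ch k B"
  by (auto simp: ch_def)

lemma ftree_children: "v \<in> ftree k \<Longrightarrow> fchildren k v \<subseteq> ftree k"
  by (auto simp: ftree_def fchildren_def nth_append)

lemma Nil_ftree[simp]: "[] \<in> ftree k"
  by (simp add: ftree_def)

definition kinv :: "nat \<Rightarrow> nat list list \<Rightarrow> bool" where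
  "kinv k ks = (alive_after k ks = ({[]} \<union> ch k (set ks)) - set ks \<and> distinct ks
     \<and> (\<forall>u \<in> set ks. u \<noteq> [] \<longrightarrow> butlast u \<in> set ks) \<and> set ks \<subseteq> ftree k)"

lemma valid_kinv: "valid_kills k ks \<Longrightarrow> kinv k ks"
proof (induction ks rule: rev_induct)
  case Nil then show ?case by (simp add: kinv_def ch_def)
next
  case (snoc v ks)
  then have vk: "valid_kills k ks" and va: "v \<in> alive_after k ks" using valid_kills_snoc by auto
  with snoc.IH have I: "kinv k ks" by simp
  have A: "alive_after k ks = ({[]} \<union> ch k (set ks)) - set ks" using I by (simp add: kinv_def)
  have vnot: "v \<notin> set ks" using va A by simp
  have vpar: "v \<noteq> [] \<longrightarrow> butlast v \<in> set ks" using va A by (auto simp: ch_mem)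
  have ftk: "set ks \<subseteq> ftree k" using I by (simp add: kinv_def)
  have vft: "v \<in> ftree k"
  proof -
    have "v = [] \<or> v \<in> ch k (set ks)" using va A by auto
    moreover have "ch k (set ks) \<subseteq> ftree k" using ftk ftree_children by (auto simp: ch_def)
    ultimately show ?thesis by auto
  qed
  have disj: "fchildren k v \<inter> (insert v (set ks)) = {}"
  proof -
    { fix u assume u: "u \<in> fchildren k v" "u \<in> insert v (set ks)"
      then have "butlast u = v" "u \<noteq> []" "length u = Suc (length v)" using fchildren_butlast by auto
      with u(2) have "u \<in> set ks" by auto
      then have "butlast u \<in> set ks" using I \<open>u \<noteq> []\<close> by (auto simp: kinv_def)
      with \<open>butlast u = v\<close> vnot have False by simp }
    then show ?thesis by blast
  qed
  have "alive_after k (ks @ [v]) = (alive_after k ks - {v}) \<union> fchildren k v"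
    by (rule alive_after_snoc)
  also have "\<dots> = ({[]} \<union> ch k (set (ks @ [v]))) - set (ks @ [v])"
    using A disj by (auto simp: ch_insert)
  finally show ?case using I vnot vpar vft by (auto simp: kinv_def)
qed

lemma alive_char: "valid_kills k ks \<Longrightarrow> alive_after k ks = ({[]} \<union> ch k (set ks)) - set ks"
  using valid_kinv kinv_def by blast

lemma alive_created: "valid_kills k ks \<Longrightarrow> alive_after k ks \<subseteq> created k ks"
  using alive_char created_def by fastforce

lemma created_mono: "created k ks \<subseteq> created k (ks @ ys)"
  by (auto simp: created_def ch_union)

lemma created_ftree: assumes "valid_kills k ks" shows "created k ks \<subseteq> ftree k"
proof -
  have s: "set ks \<subseteq> ftree k" using valid_kinv[OF assms] by (simp add: kinv_def)
  then have "ch k (set ks) \<subseteq> ftree k" using ftree_children unfolding ch_def by blast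
  then show ?thesis using s by (simp add: created_def)
qed

lemma created_parent: "valid_kills k ks \<Longrightarrow> w \<in> created k ks \<Longrightarrow> w \<noteq> [] \<Longrightarrow> butlast w \<in> set ks"
  using valid_kinv[of k ks] by (auto simp: created_def kinv_def ch_mem)

lemma created_take: "valid_kills k ks \<Longrightarrow> w \<in> created k ks \<Longrightarrow> take j w \<in> created k ks"
proof (induction "length w" arbitrary: w)
  case 0 then show ?case by simp
next
  case (Suc m)
  show ?case
  proof (cases "j \<ge> length w")
    case True then show ?thesis using Suc by simp
  next
    case False
    have "w \<noteq> []" using Suc by auto
    then have "butlast w \<in> created k ks" using created_parent Suc by (auto simp: created_def)
    moreover have "length (butlast w) = m" using Suc by simp
    ultimately have "take j (butlast w) \<in> created k ks" using Suc by blast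
    moreover have "take j (butlast w) = take j w" using False by (simp add: take_butlast)
    ultimately show ?thesis by simp
  qed
qed

lemma valid_append_batch:
  assumes "valid_kills k ks" "set K \<subseteq> alive_after k ks" "distinct K"
  shows "valid_kills k (ks @ K)"
  using assms(2,3)
proof (induction K rule: rev_induct)
  case Nil then show ?case using assms by simp
next
  case (snoc v K)
  then have V: "valid_kills k (ks @ K)" by auto
  have "v \<in> alive_after k ks" "v \<notin> set K" using snoc by auto
  then have "v \<in> alive_after k (ks @ K)" using alive_char[OF V] alive_char[OF assms(1)] by (auto simp: ch_union)
  then show ?case using V valid_kills_snoc[of k "ks @ K" v] by simp
qed

lemma alive_after_batch:
  assumes "valid_kills k ks" "set K \<subseteq> alive_after k ks" "distinct K"
  shows "alive_after k (ks @ K) = (alive_after k ks - set K) \<union> ch k (set K)"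
proof -
  have V: "valid_kills k (ks @ K)" using valid_append_batch assms by blast
  have A: "alive_after k ks = ({[]} \<union> ch k (set ks)) - set ks" using alive_char assms by blast
  have d: "ch k (set K) \<inter> (set ks \<union> set K) = {}"
  proof -
    { fix u assume u: "u \<in> ch k (set K)" "u \<in> set ks \<union> set K"
      then have ne: "u \<noteq> []" and pb: "butlast u \<in> set K" by (auto simp: ch_mem)
      then have pa: "butlast u \<in> alive_after k ks" using assms by auto
      then have pks: "butlast u \<notin> set ks" using A by simp
      from u(2) have False
      proof
        assume "u \<in> set ks"
        then show False using valid_kinv[OF assms(1)] ne pks by (auto simp: kinv_def)
      next
        assume "u \<in> set K"
        then have "u \<in> alive_after k ks" using assms by auto
        then have "butlast u \<in> set ks" using A ne by (auto simp: ch_mem)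
        then show False using pks by simp
      qed }
    then show ?thesis by blast
  qed
  show ?thesis using alive_char[OF V] A d by (auto simp: ch_union)
qed

lemma finite_ftree: "finite (ftree k)"
proof -
  have "ftree k \<subseteq> {xs. set xs \<subseteq> {..<k} \<and> length xs \<le> k}"
  proof
    fix x assume x: "x \<in> ftree k"
    have "\<forall>y \<in> set x. y < k"
    proof
      fix y assume "y \<in> set x"
      then obtain j where "j < length x" "x ! j = y" by (auto simp: in_set_conv_nth)
      then show "y < k" using x by (auto simp: ftree_def intro: order_less_le_trans[OF _ diff_le_self])
    qed
    then show "x \<in> {xs. set xs \<subseteq> {..<k} \<and> length xs \<le> k}" using x by (auto simp: ftree_def)
  qed
  moreover have "finite {xs. set xs \<subseteq> {..<k} \<and> length xs \<le> k}"
    by (rule finite_lists_length_le) simp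
  ultimately show ?thesis by (rule finite_subset)
qed

lemma alive_empty_all:
  assumes "valid_kills k ks" "alive_after k ks = {}"
  shows "ftree k \<subseteq> set ks"
proof
  fix w assume "w \<in> ftree k"
  then show "w \<in> set ks"
  proof (induction "length w" arbitrary: w)
    case 0 then show ?case using assms alive_char[OF assms(1)] by auto
  next
    case (Suc m)
    then have ne: "w \<noteq> []" by auto
    have "butlast w \<in> ftree k" using Suc.prems by (auto simp: ftree_def nth_butlast)
    then have "butlast w \<in> set ks" using Suc by auto
    moreover have "last w < k - length (butlast w)"
    proof -
      have "w ! (length w - 1) < k - (length w - 1)" using Suc.prems ne by (auto simp: ftree_def)
      then show ?thesis using ne by (simp add: last_conv_nth)
    qed
    ultimately have "w \<in> ch k (set ks)" using ne by (simp add: ch_mem)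
    then show ?case using assms alive_char[OF assms(1)] by auto
  qed
qed

lemma length_kills_le:
  assumes "valid_kills k ks" "alive_after k ks \<noteq> {}"
  shows "length ks \<le> card (ftree k) - 1"
proof -
  obtain a where a: "a \<in> alive_after k ks" using assms by auto
  have I: "kinv k ks" using valid_kinv assms by blast
  have "a \<notin> set ks" "a \<in> ftree k" using a alive_char[OF assms(1)] created_ftree[OF assms(1)] alive_created[OF assms(1)] by auto
  then have "set ks \<subset> ftree k" using I by (auto simp: kinv_def)
  then have "card (set ks) < card (ftree k)" using finite_ftree by (rule psubset_card_mono[rotated])
  then show ?thesis using I distinct_card[of ks] by (simp add: kinv_def)
qed

lemma extend_adversary:
  assumes "valid_kills k ks" "length ks \<le> card (ftree k) - 1"
  shows "\<exists>M. hydra_adversary k (ks @ M)"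
  using assms
proof (induction "card (ftree k) - 1 - length ks" arbitrary: ks)
  case 0 then show ?case by (intro exI[of _ "[]"]) (simp add: hydra_adversary_def)
next
  case (Suc m)
  have "alive_after k ks \<noteq> {}"
  proof
    assume "alive_after k ks = {}"
    then have "ftree k \<subseteq> set ks" using alive_empty_all Suc.prems by blast
    then have "card (ftree k) \<le> card (set ks)" using card_mono by blast
    also have "\<dots> \<le> length ks" by (rule card_length)
    finally show False using Suc.hyps by simp
  qed
  then obtain v where v: "v \<in> alive_after k ks" by auto
  then have "valid_kills k (ks @ [v])" using Suc.prems valid_kills_snoc by blast
  moreover have "m = card (ftree k) - 1 - length (ks @ [v])" using Suc.hyps by simp
  ultimately obtain M where "hydra_adversary k ((ks @ [v]) @ M)" using Suc by fastforce
  then show ?case by (intro exI[of _ "v # M"]) simp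
qed


definition freec :: "nat \<Rightarrow> nat list \<Rightarrow> nat list" where
  "freec k L = filter (\<lambda>i. i \<notin> set L) [0..<k]"

definition fcoords :: "nat \<Rightarrow> nat list \<Rightarrow> nat list" where
  "fcoords k v = foldl (\<lambda>L a. L @ [freec k L ! a]) [] v"

definition cfg :: "nat \<Rightarrow> nat list \<Rightarrow> (nat list \<Rightarrow> nat \<Rightarrow> nat) \<Rightarrow> nat list \<Rightarrow> nat list" where
  "cfg k b fv w = map (\<lambda>i. if i \<in> set (fcoords k w) then fv w i else b ! i) [0..<k]"

lemma fcoords_Nil[simp]: "fcoords k [] = []"
  by (simp add: fcoords_def)

lemma fcoords_snoc: "fcoords k (v @ [a]) = fcoords k v @ [freec k (fcoords k v) ! a]"
  by (simp add: fcoords_def)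

lemma length_fcoords[simp]: "length (fcoords k v) = length v"
  by (induction v rule: rev_induct) (simp_all add: fcoords_snoc)

lemma fcoords_take: "fcoords k (take j w) = take j (fcoords k w)"
proof (induction w rule: rev_induct)
  case Nil then show ?case by simp
next
  case (snoc a w)
  show ?case
  proof (cases "j \<le> length w")
    case True then show ?thesis using snoc by (simp add: fcoords_snoc)
  next
    case False then show ?thesis by (simp add: fcoords_snoc)
  qed
qed

lemma set_freec: "set (freec k L) = {..<k} - set L"
  by (auto simp: freec_def)

lemma length_freec:
  assumes "distinct L" "set L \<subseteq> {..<k}"
  shows "length (freec k L) = k - length L"
proof -
  have "length (freec k L) = card (set (freec k L))"
    by (simp add: freec_def distinct_card[symmetric])
  also have "\<dots> = card ({..<k} - set L)" by (simp add: set_freec)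
  also have "\<dots> = k - card (set L)" using assms by (simp add: card_Diff_subset)
  also have "\<dots> = k - length L" using assms by (simp add: distinct_card)
  finally show ?thesis .
qed

lemma fcoords_ftree:
  "v \<in> ftree k \<Longrightarrow> distinct (fcoords k v) \<and> set (fcoords k v) \<subseteq> {..<k}"
proof (induction v rule: rev_induct)
  case Nil then show ?case by simp
next
  case (snoc a v)
  have vt: "v \<in> ftree k"
    unfolding ftree_def
  proof (intro CollectI conjI allI impI)
    show "length v \<le> k" using snoc.prems by (simp add: ftree_def)
    fix j assume j: "j < length v"
    then have "(v @ [a]) ! j < k - j" using snoc.prems by (simp add: ftree_def)
    then show "v ! j < k - j" using j by (simp add: nth_append)
  qed
  have a: "a < k - length v" using snoc.prems by (auto simp: ftree_def nth_append dest: spec[of _ "length v"])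
  have IH: "distinct (fcoords k v) \<and> set (fcoords k v) \<subseteq> {..<k}" using snoc.IH vt by blast
  then have "a < length (freec k (fcoords k v))" using a length_freec by simp
  then have "freec k (fcoords k v) ! a \<in> {..<k} - set (fcoords k v)"
    using nth_mem set_freec by metis
  then show ?case using IH by (auto simp: fcoords_snoc)
qed

lemma nth_cfg: "i < k \<Longrightarrow> cfg k b fv w ! i = (if i \<in> set (fcoords k w) then fv w i else b ! i)"
  by (simp add: cfg_def)

lemma length_cfg[simp]: "length (cfg k b fv w) = k"
  by (simp add: cfg_def)

lemma cfg_Nil: "length b = k \<Longrightarrow> cfg k b fv [] = b"
  by (simp add: cfg_def) (metis map_nth)

lemma lcp_len_le: "lcp_len a b \<le> length a \<and> lcp_len a b \<le> length b"
  by (induction a b rule: lcp_len.induct) auto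

lemma lcp_take: "take (lcp_len a b) a = take (lcp_len a b) b"
  by (induction a b rule: lcp_len.induct) auto

lemma gks_dist_tri: "gks_dist k x z \<le> gks_dist k x y + gks_dist k y z"
proof -
  have "{i. i < k \<and> x ! i \<noteq> z ! i} \<subseteq> {i. i < k \<and> x ! i \<noteq> y ! i} \<union> {i. i < k \<and> y ! i \<noteq> z ! i}"
    by auto
  then have "card {i. i < k \<and> x ! i \<noteq> z ! i} \<le> card ({i. i < k \<and> x ! i \<noteq> y ! i} \<union> {i. i < k \<and> y ! i \<noteq> z ! i})"
    by (intro card_mono) auto
  also have "\<dots> \<le> card {i. i < k \<and> x ! i \<noteq> y ! i} + card {i. i < k \<and> y ! i \<noteq> z ! i}"
    by (rule card_Un_le)
  finally show ?thesis by (simp add: gks_dist_def)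
qed

lemma gks_dist_le_k: "gks_dist k x y \<le> k"
proof -
  have "card {i. i < k \<and> x ! i \<noteq> y ! i} \<le> card {..<k}" by (intro card_mono) auto
  then show ?thesis by (simp add: gks_dist_def)
qed

definition pfx_ok :: "nat \<Rightarrow> (nat list \<Rightarrow> nat \<Rightarrow> nat) \<Rightarrow> nat list set \<Rightarrow> bool" where
  "pfx_ok k fv C = (\<forall>w \<in> C. \<forall>j \<le> length w. \<forall>i \<in> set (fcoords k (take j w)). fv (take j w) i = fv w i)"

definition sinv :: "nat \<Rightarrow> (nat \<Rightarrow> nat) \<Rightarrow> (nat list \<Rightarrow> nat \<Rightarrow> nat) \<Rightarrow> nat list list \<Rightarrow> bool" where
  "sinv k n fv ks = (valid_kills k ks \<and> alive_after k ks \<noteq> {} \<and> pfx_ok k fv (created k ks)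
      \<and> (\<forall>w \<in> created k ks. \<forall>i \<in> set (fcoords k w). fv w i < n i))"

lemma diff_prefix:
  assumes "pfx_ok k fv C" "w \<in> C" "j \<le> length w"
  shows "{i. i < k \<and> cfg k b fv (take j w) ! i \<noteq> cfg k b fv w ! i} \<subseteq> set (drop j (fcoords k w))"
proof
  fix i assume i: "i \<in> {i. i < k \<and> cfg k b fv (take j w) ! i \<noteq> cfg k b fv w ! i}"
  have ft: "fcoords k w = fcoords k (take j w) @ drop j (fcoords k w)"
    by (simp add: fcoords_take)
  show "i \<in> set (drop j (fcoords k w))"
  proof (rule ccontr)
    assume nd: "i \<notin> set (drop j (fcoords k w))"
    show False
    proof (cases "i \<in> set (fcoords k (take j w))")
      case True
      then have "fv (take j w) i = fv w i" using assms unfolding pfx_ok_def by blast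
      moreover have "i \<in> set (fcoords k w)" using True ft by (metis Un_iff set_append)
      moreover have ik: "i < k" using i by simp
      ultimately show False using i True nth_cfg[OF ik, of b fv w] nth_cfg[OF ik, of b fv "take j w"] by simp
    next
      case False
      then have "i \<notin> set (fcoords k w)" using nd ft by (metis Un_iff set_append)
      moreover have ik: "i < k" using i by simp
      ultimately show False using i False nth_cfg[OF ik, of b fv w] nth_cfg[OF ik, of b fv "take j w"] by simp
    qed
  qed
qed

lemma cfg_dist:
  assumes "pfx_ok k fv C" "w1 \<in> C" "w2 \<in> C"
  shows "gks_dist k (cfg k b fv w1) (cfg k b fv w2) \<le> tdist w1 w2"
proof -
  let ?l = "lcp_len w1 w2"
  have l1: "?l \<le> length w1" and l2: "?l \<le> length w2" using lcp_len_le by auto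
  have tu: "take ?l w1 = take ?l w2" by (rule lcp_take)
  let ?u = "cfg k b fv (take ?l w1)"
  have "{i. i < k \<and> cfg k b fv w1 ! i \<noteq> cfg k b fv w2 ! i} \<subseteq>
        {i. i < k \<and> ?u ! i \<noteq> cfg k b fv w1 ! i} \<union> {i. i < k \<and> ?u ! i \<noteq> cfg k b fv w2 ! i}"
    by auto
  also have "\<dots> \<subseteq> set (drop ?l (fcoords k w1)) \<union> set (drop ?l (fcoords k w2))"
    using diff_prefix[OF assms(1,2) l1, of b] diff_prefix[OF assms(1,3) l2, of b] tu by auto
  finally have sub: "{i. i < k \<and> cfg k b fv w1 ! i \<noteq> cfg k b fv w2 ! i} \<subseteq>
     set (drop ?l (fcoords k w1)) \<union> set (drop ?l (fcoords k w2))" .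
  have "gks_dist k (cfg k b fv w1) (cfg k b fv w2) \<le> card (set (drop ?l (fcoords k w1)) \<union> set (drop ?l (fcoords k w2)))"
    unfolding gks_dist_def by (rule card_mono[OF _ sub]) simp
  also have "\<dots> \<le> card (set (drop ?l (fcoords k w1))) + card (set (drop ?l (fcoords k w2)))"
    by (rule card_Un_le)
  also have "\<dots> \<le> length (drop ?l (fcoords k w1)) + length (drop ?l (fcoords k w2))"
    by (intro add_mono card_length)
  also have "\<dots> = tdist w1 w2" using l1 l2 by (simp add: tdist_def)
  finally show ?thesis .
qed

definition killc :: "nat \<Rightarrow> (nat list \<Rightarrow> nat \<Rightarrow> nat) \<Rightarrow> nat list \<Rightarrow> nat list \<Rightarrow> bool" where
  "killc k fv v r = (\<forall>i \<in> set (fcoords k v). fv v i \<noteq> r ! i)"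

definition batch :: "nat \<Rightarrow> (nat list \<Rightarrow> nat \<Rightarrow> nat) \<Rightarrow> nat list list \<Rightarrow> nat list \<Rightarrow> nat list list" where
  "batch k fv ks r = (SOME l. distinct l \<and> set l = {v \<in> alive_after k ks. killc k fv v r})"

definition upd :: "nat \<Rightarrow> (nat list \<Rightarrow> nat \<Rightarrow> nat) \<Rightarrow> nat list list \<Rightarrow> nat list \<Rightarrow> (nat list \<Rightarrow> nat \<Rightarrow> nat)" where
  "upd k fv K r = (\<lambda>w. if w \<noteq> [] \<and> butlast w \<in> set K
      then (fv (butlast w))(last (fcoords k w) := r ! last (fcoords k w)) else fv w)"

definition ends :: "nat \<Rightarrow> (nat list \<Rightarrow> nat \<Rightarrow> nat) \<Rightarrow> nat list list \<Rightarrow> nat list \<Rightarrow> bool" where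
  "ends k fv ks r = (alive_after k (ks @ batch k fv ks r) = {})"

definition covered :: "nat \<Rightarrow> (nat list \<Rightarrow> nat \<Rightarrow> nat) \<Rightarrow> nat list list \<Rightarrow> nat list \<Rightarrow> bool" where
  "covered k fv ks c = (\<exists>w \<in> alive_after k ks. \<forall>i \<in> set (fcoords k w). c ! i = fv w i)"

lemma finite_alive: "valid_kills k ks \<Longrightarrow> finite (alive_after k ks)"
  using alive_created created_ftree finite_ftree finite_subset by metis

lemma batch_props:
  assumes "valid_kills k ks"
  shows "distinct (batch k fv ks r) \<and> set (batch k fv ks r) = {v \<in> alive_after k ks. killc k fv v r}"
proof -
  have "finite {v \<in> alive_after k ks. killc k fv v r}" using finite_alive[OF assms] by simp
  then have "\<exists>l. distinct l \<and> set l = {v \<in> alive_after k ks. killc k fv v r}"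
    using finite_distinct_list by blast
  then show ?thesis unfolding batch_def by (rule someI_ex)
qed

lemma batch_sub: "valid_kills k ks \<Longrightarrow> set (batch k fv ks r) \<subseteq> alive_after k ks"
  using batch_props by blast

lemma valid_batch: "valid_kills k ks \<Longrightarrow> valid_kills k (ks @ batch k fv ks r)"
  using valid_append_batch batch_props batch_sub by blast

lemma alive_batch: "valid_kills k ks \<Longrightarrow>
   alive_after k (ks @ batch k fv ks r) = (alive_after k ks - set (batch k fv ks r)) \<union> ch k (set (batch k fv ks r))"
  using alive_after_batch batch_props batch_sub by blast

lemma created_batch: "valid_kills k ks \<Longrightarrow>
   created k (ks @ batch k fv ks r) = created k ks \<union> ch k (set (batch k fv ks r))"
  using batch_sub[of k ks fv r] alive_created[of k ks]
  by (auto simp: created_def ch_union)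

lemma upd_old:
  assumes "valid_kills k ks" "w \<in> created k ks"
  shows "upd k fv (batch k fv ks r) r w = fv w"
proof -
  have "\<not> (w \<noteq> [] \<and> butlast w \<in> set (batch k fv ks r))"
  proof
    assume a: "w \<noteq> [] \<and> butlast w \<in> set (batch k fv ks r)"
    then have "butlast w \<in> set ks" using created_parent assms by blast
    moreover have "butlast w \<in> alive_after k ks" using a batch_sub assms by blast
    ultimately show False using alive_char[OF assms(1)] by auto
  qed
  then show ?thesis by (auto simp add: upd_def)
qed

lemma new_node:
  assumes "sinv k n fv ks" "w \<in> ch k (set (batch k fv ks r))"
  obtains v a where "w = v @ [a]" "v \<in> set (batch k fv ks r)" "a < k - length v"
    "last (fcoords k w) = freec k (fcoords k v) ! a"
    "last (fcoords k w) \<notin> set (fcoords k v)" "last (fcoords k w) < k"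
    "upd k fv (batch k fv ks r) r w = (fv v)(last (fcoords k w) := r ! last (fcoords k w))"
    "v \<in> created k ks"
proof -
  have V: "valid_kills k ks" using assms by (simp add: sinv_def)
  obtain v a where w: "w = v @ [a]" "v \<in> set (batch k fv ks r)" "a < k - length v"
    using assms(2) by (auto simp: ch_def fchildren_def)
  have vc: "v \<in> created k ks" using w batch_sub[OF V] alive_created[OF V] by blast
  then have vt: "v \<in> ftree k" using created_ftree[OF V] by blast
  then have d: "distinct (fcoords k v) \<and> set (fcoords k v) \<subseteq> {..<k}" by (rule fcoords_ftree)
  then have "a < length (freec k (fcoords k v))" using w length_freec by simp
  then have m: "freec k (fcoords k v) ! a \<in> {..<k} - set (fcoords k v)" using nth_mem set_freec by metis
  have lf: "last (fcoords k w) = freec k (fcoords k v) ! a" using w by (simp add: fcoords_snoc)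
  show ?thesis
    by (rule that[OF w lf]) (use m lf w vc in \<open>auto simp: upd_def\<close>)
qed

lemma sstep_inv:
  assumes "sinv k n fv ks" "gks_point k n r" "\<not> ends k fv ks r"
  shows "sinv k n (upd k fv (batch k fv ks r) r) (ks @ batch k fv ks r)"
proof -
  let ?K = "batch k fv ks r" and ?fv = "upd k fv (batch k fv ks r) r"
  have V: "valid_kills k ks" using assms by (simp add: sinv_def)
  have P: "pfx_ok k fv (created k ks)" using assms by (simp add: sinv_def)
  have B: "\<forall>w \<in> created k ks. \<forall>i \<in> set (fcoords k w). fv w i < n i" using assms by (simp add: sinv_def)
  have CB: "created k (ks @ ?K) = created k ks \<union> ch k (set ?K)" using created_batch[OF V] .
  have P2: "pfx_ok k ?fv (created k (ks @ ?K))"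
    unfolding pfx_ok_def
  proof (intro ballI allI impI)
    fix w j i assume w: "w \<in> created k (ks @ ?K)" and j: "j \<le> length w" and i: "i \<in> set (fcoords k (take j w))"
    show "?fv (take j w) i = ?fv w i"
    proof (cases "w \<in> created k ks")
      case True
      then have "take j w \<in> created k ks" using created_take V by blast
      then show ?thesis using upd_old[OF V] True P j i unfolding pfx_ok_def by metis
    next
      case False
      then have wn: "w \<in> ch k (set ?K)" using w CB by blast
      obtain v a where o: "w = v @ [a]" "v \<in> set ?K" "a < k - length v"
        "last (fcoords k w) \<notin> set (fcoords k v)"
        "?fv w = (fv v)(last (fcoords k w) := r ! last (fcoords k w))" "v \<in> created k ks"
        using new_node[OF assms(1) wn] by metis
      show ?thesis
      proof (cases "j = length w")
        case True then show ?thesis by simp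
      next
        case False
        then have jv: "j \<le> length v" using j o by simp
        then have tj: "take j w = take j v" using o by simp
        have tc: "take j v \<in> created k ks" using created_take V o by blast
        have i2: "i \<in> set (fcoords k (take j v))" using i tj by simp
        have "i \<in> set (fcoords k v)" using i2 by (metis fcoords_take in_set_takeD)
        then have ne: "i \<noteq> last (fcoords k w)" using o by auto
        have "?fv (take j w) i = fv (take j v) i" using tj upd_old[OF V tc] by simp
        also have "\<dots> = fv v i" using P o jv i2 unfolding pfx_ok_def by blast
        also have "\<dots> = ?fv w i" using o ne by simp
        finally show ?thesis .
      qed
    qed
  qed
  have B2: "\<forall>w \<in> created k (ks @ ?K). \<forall>i \<in> set (fcoords k w). ?fv w i < n i"
  proof (intro ballI)
    fix w i assume w: "w \<in> created k (ks @ ?K)" and i: "i \<in> set (fcoords k w)"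
    show "?fv w i < n i"
    proof (cases "w \<in> created k ks")
      case True then show ?thesis using upd_old[OF V True] B i by simp
    next
      case False
      then have wn: "w \<in> ch k (set ?K)" using w CB by blast
      obtain v a where o: "w = v @ [a]" "last (fcoords k w) < k"
        "?fv w = (fv v)(last (fcoords k w) := r ! last (fcoords k w))" "v \<in> created k ks"
        using new_node[OF assms(1) wn] by metis
      show ?thesis
      proof (cases "i = last (fcoords k w)")
        case True then show ?thesis using o assms(2) by (simp add: gks_point_def)
      next
        case False
        then have "i \<in> set (fcoords k v)" using i o by (simp add: fcoords_snoc)
        then show ?thesis using o False B by simp
      qed
    qed
  qed
  show ?thesis using P2 B2 valid_batch[OF V] assms(3) by (simp add: sinv_def ends_def)
qed

lemma alive_serves:
  assumes "sinv k n fv ks" "w \<in> alive_after k (ks @ batch k fv ks r)"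
  shows "\<exists>i \<in> set (fcoords k w). upd k fv (batch k fv ks r) r w i = r ! i"
proof -
  have V: "valid_kills k ks" using assms by (simp add: sinv_def)
  from assms(2) alive_batch[OF V] consider "w \<in> alive_after k ks - set (batch k fv ks r)" | "w \<in> ch k (set (batch k fv ks r))"
    by auto
  then show ?thesis
  proof cases
    case 1
    then have "\<not> killc k fv w r" using batch_props[OF V] by auto
    moreover have "w \<in> created k ks" using 1 alive_created[OF V] by auto
    ultimately show ?thesis using upd_old[OF V] by (auto simp: killc_def)
  next
    case 2
    obtain v a where o: "w = v @ [a]"
        "upd k fv (batch k fv ks r) r w = (fv v)(last (fcoords k w) := r ! last (fcoords k w))"
      using new_node[OF assms(1) 2] by metis
    have "last (fcoords k w) \<in> set (fcoords k w)" using o by (simp add: fcoords_snoc)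
    then show ?thesis using o by auto
  qed
qed

lemma covered_step:
  assumes "sinv k n fv ks" "covered k fv ks c" "gks_serves k c r"
  shows "covered k (upd k fv (batch k fv ks r) r) (ks @ batch k fv ks r) c"
proof -
  have V: "valid_kills k ks" using assms by (simp add: sinv_def)
  let ?K = "batch k fv ks r" and ?fv = "upd k fv (batch k fv ks r) r"
  obtain w where w: "w \<in> alive_after k ks" "\<forall>i \<in> set (fcoords k w). c ! i = fv w i"
    using assms(2) by (auto simp: covered_def)
  have wc: "w \<in> created k ks" using w alive_created[OF V] by auto
  show ?thesis
  proof (cases "killc k fv w r")
    case False
    then have "w \<in> alive_after k (ks @ ?K)" using w alive_batch[OF V] batch_props[OF V] by auto
    then show ?thesis using w upd_old[OF V wc] unfolding covered_def by metis
  next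
    case True
    then have wK: "w \<in> set ?K" using w batch_props[OF V] by auto
    obtain i0 where i0: "i0 < k" "c ! i0 = r ! i0" using assms(3) by (auto simp: gks_serves_def)
    have "i0 \<notin> set (fcoords k w)" using True w i0 by (auto simp: killc_def)
    have wt: "w \<in> ftree k" using wc created_ftree[OF V] by blast
    then have d: "distinct (fcoords k w) \<and> set (fcoords k w) \<subseteq> {..<k}" by (rule fcoords_ftree)
    have "i0 \<in> set (freec k (fcoords k w))" using \<open>i0 \<notin> _\<close> i0 by (simp add: set_freec)
    then obtain a where a: "a < length (freec k (fcoords k w))" "freec k (fcoords k w) ! a = i0"
      by (auto simp: in_set_conv_nth)
    have al: "a < k - length w" using a d length_freec by simp
    let ?u = "w @ [a]"
    have uch: "?u \<in> ch k (set ?K)" using wK al by (auto simp: ch_def fchildren_def)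
    then have ua: "?u \<in> alive_after k (ks @ ?K)" using alive_batch[OF V] by auto
    have lf: "last (fcoords k ?u) = i0" using a by (simp add: fcoords_snoc)
    have fu: "?fv ?u = (fv w)(i0 := r ! i0)" using wK lf by (simp add: upd_def)
    have "\<forall>i \<in> set (fcoords k ?u). c ! i = ?fv ?u i"
      using fu w i0 a by (auto simp: fcoords_snoc)
    then show ?thesis using ua unfolding covered_def by blast
  qed
qed

lemma covered_fresh: "covered k fv [] c"
  by (simp add: covered_def)

lemma sinv_fresh: "sinv k n fv []"
  by (simp add: sinv_def pfx_ok_def created_def ch_def)

lemma not_ends_fresh:
  assumes "k \<ge> 1"
  shows "\<not> ends k fv [] r"
proof -
  have "gks_serves k r r" unfolding gks_serves_def using assms by (intro exI[of _ 0]) simp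
  then have "covered k (upd k fv (batch k fv [] r) r) ([] @ batch k fv [] r) r"
    using covered_step[OF sinv_fresh covered_fresh] by blast
  then show ?thesis by (auto simp: covered_def ends_def)
qed

lemma covered_not_ends:
  assumes "sinv k n fv ks" "covered k fv ks c" "gks_serves k c r"
  shows "\<not> ends k fv ks r"
  using covered_step[OF assms] by (auto simp: covered_def ends_def)

lemma cfg_point:
  assumes "sinv k n fv ks" "w \<in> created k ks" "gks_point k n b"
  shows "gks_point k n (cfg k b fv w)"
  using assms by (auto simp: gks_point_def sinv_def nth_cfg)


lemma hydra_run_append:
  "hydra_run H past ps (K @ vs) =
     bind_pmf (hydra_run H past ps K) (\<lambda>X. map_pmf (\<lambda>Y. X @ Y) (hydra_run H (past @ K) (ps @ X) vs))"
proof (induction K arbitrary: past ps)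
  case Nil
  have "map_pmf ((@) []) (hydra_run H past ps vs) = hydra_run H past ps vs"
    by (rule map_pmf_idI) simp
  then show ?case by (simp only: hydra_run.simps(1) bind_return_pmf append_Nil append_Nil2)
next
  case (Cons v K)
  show ?case
  proof (cases "v = last ps")
    case True
    then show ?thesis
      apply (simp add: Cons.IH bind_assoc_pmf bind_map_pmf map_bind_pmf map_pmf_comp)
      apply (intro bind_pmf_cong refl arg_cong2[where f=map_pmf])
      apply (rule ext)
      apply simp
      done
  next
    case False
    then show ?thesis
      apply (simp add: Cons.IH bind_map_pmf map_bind_pmf map_pmf_comp)
      apply (intro bind_pmf_cong refl arg_cong2[where f=map_pmf])
      apply (rule ext)
      apply simp
      done
  qed
qed

lemma hydra_run_length: "X \<in> set_pmf (hydra_run H past ps K) \<Longrightarrow> length X = length K"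
proof (induction K arbitrary: past ps X)
  case Nil then show ?case by simp
next
  case (Cons v K)
  then show ?case by (auto split: if_splits)
qed

lemma hydra_run_take:
  "map_pmf (take (length K)) (hydra_run H past ps (K @ M)) = hydra_run H past ps K"
proof -
  have "map_pmf (take (length K)) (hydra_run H past ps (K @ M)) =
     bind_pmf (hydra_run H past ps K) (\<lambda>X. map_pmf (\<lambda>Y. take (length K) (X @ Y)) (hydra_run H (past @ K) (ps @ X) M))"
    by (simp add: hydra_run_append map_bind_pmf map_pmf_comp)
  also have "\<dots> = bind_pmf (hydra_run H past ps K) (\<lambda>X. return_pmf X)"
    by (intro bind_pmf_cong refl) (auto dest: hydra_run_length)
  also have "\<dots> = hydra_run H past ps K" by (simp add: bind_return_pmf')
  finally show ?thesis .
qed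

lemma valid_kills_hd: "valid_kills k (xs @ ys) \<Longrightarrow> ys \<noteq> [] \<Longrightarrow> hd ys \<in> alive_after k xs"
proof -
  assume a: "valid_kills k (xs @ ys)" "ys \<noteq> []"
  then have "xs @ ys = (xs @ [hd ys]) @ tl ys" by simp
  with a have "valid_kills k (xs @ [hd ys])" using valid_kills_append by metis
  then show ?thesis using valid_kills_snoc by blast
qed

lemma hydra_run_support:
  assumes "valid_hydra_alg k H"
  shows "valid_kills k (past @ K) \<Longrightarrow> alive_after k (past @ K) \<noteq> {} \<Longrightarrow> ps \<noteq> [] \<Longrightarrow>
    last ps \<in> alive_after k past \<Longrightarrow> X \<in> set_pmf (hydra_run H past ps K) \<Longrightarrow>
    set X \<subseteq> created k (past @ K) \<and> last (ps @ X) \<in> alive_after k (past @ K)"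
proof (induction K arbitrary: past ps X)
  case Nil then show ?case by simp
next
  case (Cons v K)
  have V1: "valid_kills k (past @ [v])" using Cons.prems(1) valid_kills_append[of k "past @ [v]" K] by simp
  have A1: "alive_after k (past @ [v]) \<noteq> {}"
  proof (cases "K = []")
    case True then show ?thesis using Cons.prems by simp
  next
    case False
    then have "hd K \<in> alive_after k (past @ [v])" using valid_kills_hd[of k "past @ [v]" K] Cons.prems by simp
    then show ?thesis by auto
  qed
  have V2: "valid_kills k ((past @ [v]) @ K)" "alive_after k ((past @ [v]) @ K) \<noteq> {}" using Cons.prems by auto
  have CM: "created k (past @ [v]) \<subseteq> created k (past @ v # K)"
    using created_mono[of k "past @ [v]" K] by simp
  show ?case
  proof (cases "v = last ps")
    case True
    with Cons.prems(5) obtain p Y where X: "X = p # Y" and p: "p \<in> set_pmf (H (past @ [v]) ps)"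
      and Y: "Y \<in> set_pmf (hydra_run H (past @ [v]) (ps @ [p]) K)" by auto
    have pa: "p \<in> alive_after k (past @ [v])" using assms p V1 A1 unfolding valid_hydra_alg_def by blast
    have IH: "set Y \<subseteq> created k ((past @ [v]) @ K) \<and> last ((ps @ [p]) @ Y) \<in> alive_after k ((past @ [v]) @ K)"
      using Cons.IH[OF V2 _ _ Y] pa by simp
    have "p \<in> created k (past @ v # K)" using pa alive_created[OF V1] CM by blast
    then show ?thesis using IH X by simp
  next
    case False
    with Cons.prems(5) obtain Y where X: "X = last ps # Y"
      and Y: "Y \<in> set_pmf (hydra_run H (past @ [v]) (ps @ [last ps]) K)" by auto
    have pa: "last ps \<in> alive_after k (past @ [v])" using Cons.prems(4) False by (simp add: alive_after_snoc)
    have IH: "set Y \<subseteq> created k ((past @ [v]) @ K) \<and> last ((ps @ [last ps]) @ Y) \<in> alive_after k ((past @ [v]) @ K)"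
      using Cons.IH[OF V2 _ _ Y] pa by simp
    have "last ps \<in> created k (past @ v # K)" using pa alive_created[OF V1] CM by blast
    then show ?thesis using IH X by simp
  qed
qed

lemma path_cost_Cons_Cons: "path_cost d (a # b # xs) = d a b + path_cost d (b # xs)"
  by (simp add: path_cost_def)

lemma path_cost_single[simp]: "path_cost d [a] = 0"
  by (simp add: path_cost_def)

lemma path_cost_append: "path_cost d (a # X @ Y) = path_cost d (a # X) + path_cost d (last (a # X) # Y)"
proof (induction X arbitrary: a)
  case Nil
  then show ?case by simp
next
  case (Cons b X)
  then show ?case by (simp add: path_cost_Cons_Cons)
qed

lemma path_cost_take_le: "path_cost d (a # take m X) \<le> path_cost d (a # X)"
proof -
  have "path_cost d (a # X) = path_cost d (a # take m X @ drop m X)" by simp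
  also have "\<dots> = path_cost d (a # take m X) + path_cost d (last (a # take m X) # drop m X)"
    by (rule path_cost_append)
  finally show ?thesis by simp
qed

lemma cfg_chain:
  assumes "pfx_ok k fv C" "u \<in> C" "set X \<subseteq> C"
  shows "gks_dist k (cfg k b fv u) (cfg k b fv (last (u # X))) \<le> path_cost tdist (u # X)"
  using assms(2,3)
proof (induction X arbitrary: u)
  case Nil then show ?case by (simp add: gks_dist_def)
next
  case (Cons v X)
  have "gks_dist k (cfg k b fv u) (cfg k b fv (last (u # v # X))) \<le>
        gks_dist k (cfg k b fv u) (cfg k b fv v) + gks_dist k (cfg k b fv v) (cfg k b fv (last (v # X)))"
    using gks_dist_tri by simp
  also have "\<dots> \<le> tdist u v + path_cost tdist (v # X)"
    using Cons cfg_dist[OF assms(1)] by (intro add_mono) auto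
  finally show ?case by (simp add: path_cost_Cons_Cons)
qed

subsection \<open>From state processes to history-based algorithms\<close>

fun orun :: "('s \<Rightarrow> nat list \<Rightarrow> 's pmf) \<Rightarrow> ('s \<Rightarrow> nat list) \<Rightarrow> 's \<Rightarrow> nat list list \<Rightarrow> nat list list pmf" where
  "orun st out s [] = return_pmf []"
| "orun st out s (r # rs) = bind_pmf (st s r) (\<lambda>s'. map_pmf (\<lambda>rest. out s' # rest) (orun st out s' rs))"

definition bel :: "('s \<Rightarrow> nat list \<Rightarrow> 's pmf) \<Rightarrow> ('s \<Rightarrow> nat list) \<Rightarrow> 's \<Rightarrow> nat list list \<Rightarrow> nat list list \<Rightarrow> 's pmf" where
  "bel st out s0 rs cs = foldl (\<lambda>B rc. cond_pmf (bind_pmf B (\<lambda>s. st s (fst rc))) {s'. out s' = snd rc})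
      (return_pmf s0) (zip rs (tl cs))"

definition Aof :: "('s \<Rightarrow> nat list \<Rightarrow> 's pmf) \<Rightarrow> ('s \<Rightarrow> nat list) \<Rightarrow> 's \<Rightarrow> gks_alg" where
  "Aof st out s0 rs cs = map_pmf out (bind_pmf (bel st out s0 (butlast rs) cs) (\<lambda>s. st s (last rs)))"

definition Aval :: "nat \<Rightarrow> (nat \<Rightarrow> nat) \<Rightarrow> ('s \<Rightarrow> nat list \<Rightarrow> 's pmf) \<Rightarrow> ('s \<Rightarrow> nat list) \<Rightarrow> 's \<Rightarrow> gks_alg" where
  "Aval k n st out s0 rs cs = (if set_pmf (Aof st out s0 rs cs) \<subseteq> {c. gks_point k n c \<and> gks_serves k c (last rs)}
      then Aof st out s0 rs cs else return_pmf (last rs))"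

lemma Aval_valid:
  assumes "k \<ge> 1"
  shows "valid_gks_alg k n (Aval k n st out s0)"
  unfolding valid_gks_alg_def
proof (intro allI impI)
  fix rs cs assume a: "rs \<noteq> [] \<and> (\<forall>r\<in>set rs. gks_point k n r)"
  then have "gks_point k n (last rs)" by simp
  moreover have "gks_serves k (last rs) (last rs)" unfolding gks_serves_def using assms by (intro exI[of _ 0]) simp
  ultimately show "set_pmf (Aval k n st out s0 rs cs) \<subseteq> {c. gks_point k n c \<and> gks_serves k c (last rs)}"
    by (simp add: Aval_def)
qed

lemma bel_snoc:
  assumes "length cs = Suc (length past)"
  shows "bel st out s0 (past @ [r]) (cs @ [c]) =
     cond_pmf (bind_pmf (bel st out s0 past cs) (\<lambda>s. st s r)) {s'. out s' = c}"
proof -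
  have "cs \<noteq> []" using assms by auto
  then have "tl (cs @ [c]) = tl cs @ [c]" by simp
  moreover have "length (tl cs) = length past" using assms by simp
  ultimately have "zip (past @ [r]) (tl (cs @ [c])) = zip past (tl cs) @ [(r, c)]" by simp
  then show ?thesis by (simp add: bel_def)
qed

lemma Aval_run:
  assumes inv: "\<And>s r s'. P s \<Longrightarrow> gks_point k n r \<Longrightarrow> s' \<in> set_pmf (st s r) \<Longrightarrow>
                  P s' \<and> gks_point k n (out s') \<and> gks_serves k (out s') r"
  shows "length cs = Suc (length past) \<Longrightarrow> (\<forall>s \<in> set_pmf (bel st out s0 past cs). P s) \<Longrightarrow>
    (\<forall>r \<in> set rest. gks_point k n r) \<Longrightarrow>
    gks_run (Aval k n st out s0) past cs rest = bind_pmf (bel st out s0 past cs) (\<lambda>s. orun st out s rest)"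
proof (induction rest arbitrary: past cs)
  case Nil then show ?case by simp
next
  case (Cons r rest)
  let ?B = "bel st out s0 past cs"
  let ?N = "bind_pmf ?B (\<lambda>s. st s r)"
  let ?A = "Aval k n st out s0"
  have rp: "gks_point k n r" using Cons.prems by simp
  have Nsup: "\<And>s'. s' \<in> set_pmf ?N \<Longrightarrow> P s' \<and> gks_point k n (out s') \<and> gks_serves k (out s') r"
    using Cons.prems(2) inv rp by auto
  have Aeq: "?A (past @ [r]) cs = map_pmf out ?N"
    using Nsup by (auto simp: Aval_def Aof_def)
  have ne: "\<And>s'. s' \<in> set_pmf ?N \<Longrightarrow> set_pmf ?N \<inter> {x. out x = out s'} \<noteq> {}" by blast
  have IH: "\<And>s'. s' \<in> set_pmf ?N \<Longrightarrow>
     gks_run ?A (past @ [r]) (cs @ [out s']) rest =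
       bind_pmf (cond_pmf ?N {x. out x = out s'}) (\<lambda>t. orun st out t rest)"
  proof -
    fix s' assume s': "s' \<in> set_pmf ?N"
    have b: "bel st out s0 (past @ [r]) (cs @ [out s']) = cond_pmf ?N {x. out x = out s'}"
      by (rule bel_snoc[OF Cons.prems(1)])
    have "\<forall>t \<in> set_pmf (cond_pmf ?N {x. out x = out s'}). P t"
      using set_cond_pmf[OF ne[OF s']] Nsup by auto
    then show "gks_run ?A (past @ [r]) (cs @ [out s']) rest =
       bind_pmf (cond_pmf ?N {x. out x = out s'}) (\<lambda>t. orun st out t rest)"
      using Cons.IH[of "cs @ [out s']" "past @ [r]"] Cons.prems b by simp
  qed
  have "gks_run ?A past cs (r # rest) =
      bind_pmf ?N (\<lambda>s'. map_pmf (\<lambda>x. out s' # x) (gks_run ?A (past @ [r]) (cs @ [out s']) rest))"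
    by (simp add: Aeq bind_map_pmf)
  also have "\<dots> = bind_pmf ?N (\<lambda>s'. bind_pmf (cond_pmf ?N {x. out x = out s'})
                    (\<lambda>t. map_pmf (\<lambda>x. out t # x) (orun st out t rest)))"
  proof (rule bind_pmf_cong[OF refl])
    fix s' assume s': "s' \<in> set_pmf ?N"
    have "map_pmf (\<lambda>x. out s' # x) (gks_run ?A (past @ [r]) (cs @ [out s']) rest) =
       bind_pmf (cond_pmf ?N {x. out x = out s'}) (\<lambda>t. map_pmf (\<lambda>x. out s' # x) (orun st out t rest))"
      by (simp add: IH[OF s'] map_bind_pmf)
    also have "\<dots> = bind_pmf (cond_pmf ?N {x. out x = out s'}) (\<lambda>t. map_pmf (\<lambda>x. out t # x) (orun st out t rest))"
      by (rule bind_pmf_cong[OF refl]) (use set_cond_pmf[OF ne[OF s']] in auto)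
    finally show "map_pmf (\<lambda>x. out s' # x) (gks_run ?A (past @ [r]) (cs @ [out s']) rest) = \<dots>" .
  qed
  also have "\<dots> = bind_pmf (bind_pmf ?N (\<lambda>s'. cond_pmf ?N {x. out x = out s'}))
                    (\<lambda>t. map_pmf (\<lambda>x. out t # x) (orun st out t rest))"
    by (simp add: bind_assoc_pmf)
  also have "bind_pmf ?N (\<lambda>s'. cond_pmf ?N {x. out x = out s'}) = ?N"
    apply (rule bind_cond_pmf_cancel)
      apply blast
     apply blast
    apply (rule arg_cong[where f="measure_pmf.prob _"])
    apply auto
    done
  also have "bind_pmf ?N (\<lambda>t. map_pmf (\<lambda>x. out t # x) (orun st out t rest)) =
       bind_pmf ?B (\<lambda>s. orun st out s (r # rest))"
    by (simp add: bind_assoc_pmf)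
  finally show ?case .
qed

lemma Aval_run0:
  assumes inv: "\<And>s r s'. P s \<Longrightarrow> gks_point k n r \<Longrightarrow> s' \<in> set_pmf (st s r) \<Longrightarrow>
                  P s' \<and> gks_point k n (out s') \<and> gks_serves k (out s') r"
    and "P s0" "\<forall>r \<in> set I. gks_point k n r"
  shows "gks_run (Aval k n st out s0) [] [c0] I = orun st out s0 I"
proof -
  have "bel st out s0 [] [c0] = return_pmf s0" by (simp add: bel_def)
  then show ?thesis using Aval_run[of P k n st out "[c0]" "[]" s0 I] assms by (simp add: bind_return_pmf)
qed

lemma orun_length: "cs \<in> set_pmf (orun st out s I) \<Longrightarrow> length cs = length I"
  by (induction I arbitrary: s cs) auto


type_synonym st = "nat list \<times> (nat list \<Rightarrow> nat \<Rightarrow> nat) \<times> nat list list \<times> nat list list"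

definition stepc :: "nat \<Rightarrow> hydra_alg \<Rightarrow> st \<Rightarrow> nat list \<Rightarrow> st pmf" where
  "stepc k H s r = (case s of (b, fv, ks, ps) \<Rightarrow>
     map_pmf (\<lambda>X. (b, upd k fv (batch k fv ks r) r, ks @ batch k fv ks r, ps @ X))
       (hydra_run H ks ps (batch k fv ks r)))"

definition outs :: "nat \<Rightarrow> st \<Rightarrow> nat list" where
  "outs k s = (case s of (b, fv, ks, ps) \<Rightarrow> cfg k b fv (last ps))"

definition pstep :: "nat \<Rightarrow> hydra_alg \<Rightarrow> st \<Rightarrow> nat list \<Rightarrow> st pmf" where
  "pstep k H s r = (case s of (b, fv, ks, ps) \<Rightarrow>
     if ends k fv ks r then stepc k H (outs k s, fv, [], [[]]) r else stepc k H s r)"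

definition Inv :: "nat \<Rightarrow> (nat \<Rightarrow> nat) \<Rightarrow> st \<Rightarrow> bool" where
  "Inv k n s = (case s of (b, fv, ks, ps) \<Rightarrow>
     sinv k n fv ks \<and> gks_point k n b \<and> ps \<noteq> [] \<and> last ps \<in> alive_after k ks)"

lemma stepc_simp: "stepc k H (b, fv, ks, ps) r =
     map_pmf (\<lambda>X. (b, upd k fv (batch k fv ks r) r, ks @ batch k fv ks r, ps @ X))
       (hydra_run H ks ps (batch k fv ks r))"
  by (simp add: stepc_def)

lemma outs_simp[simp]: "outs k (b, fv, ks, ps) = cfg k b fv (last ps)"
  by (simp add: outs_def)

lemma pstep_simp: "pstep k H (b, fv, ks, ps) r =
     (if ends k fv ks r then stepc k H (cfg k b fv (last ps), fv, [], [[]]) r else stepc k H (b, fv, ks, ps) r)"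
  by (simp add: pstep_def)

lemma Inv_simp[simp]: "Inv k n (b, fv, ks, ps) =
     (sinv k n fv ks \<and> gks_point k n b \<and> ps \<noteq> [] \<and> last ps \<in> alive_after k ks)"
  by (simp add: Inv_def)

lemma stepc_inv:
  assumes H: "valid_hydra_alg k H" and I: "Inv k n (b, fv, ks, ps)" and r: "gks_point k n r"
    and ne: "\<not> ends k fv ks r" and s': "s' \<in> set_pmf (stepc k H (b, fv, ks, ps) r)"
  shows "Inv k n s' \<and> gks_point k n (outs k s') \<and> gks_serves k (outs k s') r"
proof -
  let ?K = "batch k fv ks r" and ?fv = "upd k fv (batch k fv ks r) r"
  obtain X where X: "X \<in> set_pmf (hydra_run H ks ps ?K)" and s'e: "s' = (b, ?fv, ks @ ?K, ps @ X)"
    using s' by (auto simp: stepc_simp)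
  have S: "sinv k n fv ks" using I by simp
  have V: "valid_kills k ks" using S by (simp add: sinv_def)
  have S2: "sinv k n ?fv (ks @ ?K)" using sstep_inv[OF S r ne] .
  have V2: "valid_kills k (ks @ ?K)" "alive_after k (ks @ ?K) \<noteq> {}" using S2 by (auto simp: sinv_def)
  have pne: "ps \<noteq> []" and lpa: "last ps \<in> alive_after k ks" using I by simp_all
  have sup: "set X \<subseteq> created k (ks @ ?K) \<and> last (ps @ X) \<in> alive_after k (ks @ ?K)"
    using hydra_run_support[OF H V2(1,2) pne lpa X] by simp
  let ?w = "last (ps @ X)"
  have wc: "?w \<in> created k (ks @ ?K)" using sup alive_created[OF V2(1)] by blast
  have pt: "gks_point k n (cfg k b ?fv ?w)" using cfg_point[OF S2 wc] I by simp
  obtain i where i: "i \<in> set (fcoords k ?w)" "?fv ?w i = r ! i" using alive_serves[OF S] sup by blast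
  have "?w \<in> ftree k" using wc created_ftree[OF V2(1)] by blast
  then have ik: "i < k" using fcoords_ftree i by blast
  have "cfg k b ?fv ?w ! i = r ! i" using i ik by (simp add: nth_cfg)
  then have sv: "gks_serves k (cfg k b ?fv ?w) r" using ik by (auto simp: gks_serves_def)
  show ?thesis using s'e S2 I sup pt sv by simp
qed

lemma pstep_inv:
  assumes H: "valid_hydra_alg k H" and k: "k \<ge> 1" and I: "Inv k n s" and r: "gks_point k n r"
    and s': "s' \<in> set_pmf (pstep k H s r)"
  shows "Inv k n s' \<and> gks_point k n (outs k s') \<and> gks_serves k (outs k s') r"
proof -
  obtain b fv ks ps where se: "s = (b, fv, ks, ps)" by (cases s) auto
  show ?thesis
  proof (cases "ends k fv ks r")
    case True
    have I0: "Inv k n (cfg k b fv (last ps), fv, [], [[]])"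
    proof -
      have S: "sinv k n fv ks" using I se by simp
      have "last ps \<in> created k ks" using I se alive_created S by (auto simp: sinv_def)
      then have "gks_point k n (cfg k b fv (last ps))" using cfg_point[OF S] I se by simp
      then show ?thesis using sinv_fresh by simp
    qed
    show ?thesis using stepc_inv[OF H I0 r not_ends_fresh[OF k]] s' se True by (simp add: pstep_simp)
  next
    case False
    have I': "Inv k n (b, fv, ks, ps)" using I se by simp
    have "s' \<in> set_pmf (stepc k H (b, fv, ks, ps) r)" using s' se False by (simp add: pstep_simp)
    then show ?thesis using stepc_inv[OF H I' r False] by blast
  qed
qed

subsection \<open>Costs\<close>

definition Cg :: "nat \<Rightarrow> hydra_alg \<Rightarrow> st \<Rightarrow> nat list list \<Rightarrow> ennreal" where
  "Cg k H s I = (\<integral>\<^sup>+ cs. of_nat (path_cost (gks_dist k) (outs k s # cs)) \<partial>measure_pmf (orun (pstep k H) (outs k) s I))"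

definition Ch :: "hydra_alg \<Rightarrow> nat list list \<Rightarrow> nat list list \<Rightarrow> nat list list \<Rightarrow> ennreal" where
  "Ch H ks ps L = (\<integral>\<^sup>+ X. of_nat (path_cost tdist (last ps # X)) \<partial>measure_pmf (hydra_run H ks ps L))"

fun phk :: "nat \<Rightarrow> (nat list \<Rightarrow> nat \<Rightarrow> nat) \<Rightarrow> nat list list \<Rightarrow> nat list list \<Rightarrow> nat list list" where
  "phk k fv ks [] = []"
| "phk k fv ks (r # I) = (if ends k fv ks r then []
     else batch k fv ks r @ phk k (upd k fv (batch k fv ks r) r) (ks @ batch k fv ks r) I)"

fun nres :: "nat \<Rightarrow> (nat list \<Rightarrow> nat \<Rightarrow> nat) \<Rightarrow> nat list list \<Rightarrow> nat list list \<Rightarrow> nat" where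
  "nres k fv ks [] = 0"
| "nres k fv ks (r # I) = (if ends k fv ks r
     then Suc (nres k (upd k fv (batch k fv [] r) r) ([] @ batch k fv [] r) I)
     else nres k (upd k fv (batch k fv ks r) r) (ks @ batch k fv ks r) I)"

lemma nn_int_add_const:
  "(\<integral>\<^sup>+ x. f x + c \<partial>measure_pmf p) = (\<integral>\<^sup>+ x. f x \<partial>measure_pmf p) + c"
  by (subst nn_integral_add) (simp_all add: measure_pmf.emeasure_space_1)

lemma nn_int_const_add:
  "(\<integral>\<^sup>+ x. c + f x \<partial>measure_pmf p) = c + (\<integral>\<^sup>+ x. f x \<partial>measure_pmf p)"
  using nn_int_add_const[where f=f and c=c and p=p] by (simp add: add.commute)

lemma nn_int_mono_pmf:
  "(\<And>x. x \<in> set_pmf p \<Longrightarrow> f x \<le> g x) \<Longrightarrow>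
     (\<integral>\<^sup>+ x. f x \<partial>measure_pmf p) \<le> (\<integral>\<^sup>+ x. g x \<partial>measure_pmf p)"
  by (rule nn_integral_mono_AE) (simp add: AE_measure_pmf_iff)

lemma nn_int_cong_pmf:
  "(\<And>x. x \<in> set_pmf p \<Longrightarrow> f x = g x) \<Longrightarrow>
     (\<integral>\<^sup>+ x. f x \<partial>measure_pmf p) = (\<integral>\<^sup>+ x. g x \<partial>measure_pmf p)"
  by (rule nn_integral_cong_AE) (simp add: AE_measure_pmf_iff)

lemma Cg_Nil: "Cg k H s [] = 0"
  by (simp add: Cg_def)

lemma Cg_Cons: "Cg k H s (r # I) =
   (\<integral>\<^sup>+ s'. of_nat (gks_dist k (outs k s) (outs k s')) + Cg k H s' I \<partial>measure_pmf (pstep k H s r))"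
proof -
  have "Cg k H s (r # I) = (\<integral>\<^sup>+ s'. \<integral>\<^sup>+ cs. of_nat (gks_dist k (outs k s) (outs k s')) +
          of_nat (path_cost (gks_dist k) (outs k s' # cs)) \<partial>measure_pmf (orun (pstep k H) (outs k) s' I)
          \<partial>measure_pmf (pstep k H s r))"
    by (simp add: Cg_def path_cost_Cons_Cons)
  also have "\<dots> = (\<integral>\<^sup>+ s'. of_nat (gks_dist k (outs k s) (outs k s')) + Cg k H s' I \<partial>measure_pmf (pstep k H s r))"
    by (simp only: nn_int_const_add Cg_def)
  finally show ?thesis .
qed

lemma Ch_Nil: "Ch H ks ps [] = 0"
  by (simp add: Ch_def)

lemma one_step:
  assumes H: "valid_hydra_alg k H" and I: "Inv k n (b, fv, ks, ps)" and r: "gks_point k n r"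
    and ne: "\<not> ends k fv ks r"
    and IH: "\<And>X. X \<in> set_pmf (hydra_run H ks ps (batch k fv ks r)) \<Longrightarrow>
       Cg k H (b, upd k fv (batch k fv ks r) r, ks @ batch k fv ks r, ps @ X) I
         \<le> Ch H (ks @ batch k fv ks r) (ps @ X) L + c"
  shows "(\<integral>\<^sup>+ s'. of_nat (gks_dist k (cfg k b fv (last ps)) (outs k s')) + Cg k H s' I
            \<partial>measure_pmf (stepc k H (b, fv, ks, ps) r))
         \<le> Ch H ks ps (batch k fv ks r @ L) + c"
proof -
  let ?K = "batch k fv ks r" and ?fv = "upd k fv (batch k fv ks r) r"
  have S: "sinv k n fv ks" using I by simp
  have V: "valid_kills k ks" using S by (simp add: sinv_def)
  have S2: "sinv k n ?fv (ks @ ?K)" using sstep_inv[OF S r ne] .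
  have V2: "valid_kills k (ks @ ?K)" "alive_after k (ks @ ?K) \<noteq> {}" using S2 by (auto simp: sinv_def)
  have P2: "pfx_ok k ?fv (created k (ks @ ?K))" using S2 by (simp add: sinv_def)
  have lpc: "last ps \<in> created k ks" using I alive_created[OF V] by auto
  then have lpc2: "last ps \<in> created k (ks @ ?K)" using created_mono by blast
  have pne: "ps \<noteq> []" using I by simp
  have step1: "\<And>X. X \<in> set_pmf (hydra_run H ks ps ?K) \<Longrightarrow>
      of_nat (gks_dist k (cfg k b fv (last ps)) (cfg k b ?fv (last (ps @ X))))
        \<le> (of_nat (path_cost tdist (last ps # X)) :: ennreal)"
  proof -
    fix X assume X: "X \<in> set_pmf (hydra_run H ks ps ?K)"
    have lpa: "last ps \<in> alive_after k ks" using I by simp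
    have sup: "set X \<subseteq> created k (ks @ ?K)"
      using hydra_run_support[OF H V2(1,2) pne lpa X] by simp
    have "cfg k b fv (last ps) = cfg k b ?fv (last ps)" using upd_old[OF V lpc] by (simp add: cfg_def)
    moreover have "last (ps @ X) = last (last ps # X)" using pne by (cases X rule: rev_cases) auto
    ultimately show "of_nat (gks_dist k (cfg k b fv (last ps)) (cfg k b ?fv (last (ps @ X))))
        \<le> (of_nat (path_cost tdist (last ps # X)) :: ennreal)"
      using cfg_chain[OF P2 lpc2 sup, of b] by simp
  qed
  have "(\<integral>\<^sup>+ s'. of_nat (gks_dist k (cfg k b fv (last ps)) (outs k s')) + Cg k H s' I
            \<partial>measure_pmf (stepc k H (b, fv, ks, ps) r))
     = (\<integral>\<^sup>+ X. of_nat (gks_dist k (cfg k b fv (last ps)) (cfg k b ?fv (last (ps @ X))))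
            + Cg k H (b, ?fv, ks @ ?K, ps @ X) I \<partial>measure_pmf (hydra_run H ks ps ?K))"
    by (simp add: stepc_simp)
  also have "\<dots> \<le> (\<integral>\<^sup>+ X. (of_nat (path_cost tdist (last ps # X))
            + Ch H (ks @ ?K) (ps @ X) L) + c \<partial>measure_pmf (hydra_run H ks ps ?K))"
    by (rule nn_int_mono_pmf) (use step1 IH in \<open>auto simp: add.assoc intro!: add_mono\<close>)
  also have "\<dots> = (\<integral>\<^sup>+ X. (of_nat (path_cost tdist (last ps # X))
            + Ch H (ks @ ?K) (ps @ X) L) \<partial>measure_pmf (hydra_run H ks ps ?K)) + c"
    by (rule nn_int_add_const)
  also have "(\<integral>\<^sup>+ X. (of_nat (path_cost tdist (last ps # X))
            + Ch H (ks @ ?K) (ps @ X) L) \<partial>measure_pmf (hydra_run H ks ps ?K)) = Ch H ks ps (?K @ L)"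
  proof -
    have "Ch H ks ps (?K @ L) = (\<integral>\<^sup>+ X. \<integral>\<^sup>+ Y. of_nat (path_cost tdist (last ps # X @ Y))
        \<partial>measure_pmf (hydra_run H (ks @ ?K) (ps @ X) L) \<partial>measure_pmf (hydra_run H ks ps ?K))"
      by (simp add: Ch_def hydra_run_append)
    also have "\<dots> = (\<integral>\<^sup>+ X. \<integral>\<^sup>+ Y. of_nat (path_cost tdist (last ps # X)) + of_nat (path_cost tdist (last (ps @ X) # Y))
        \<partial>measure_pmf (hydra_run H (ks @ ?K) (ps @ X) L) \<partial>measure_pmf (hydra_run H ks ps ?K))"
    proof -
      have "\<And>X. last (ps @ X) = last (last ps # X)" using pne by (case_tac X rule: rev_cases) auto
      then show ?thesis by (simp add: path_cost_append)
    qed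
    also have "\<dots> = (\<integral>\<^sup>+ X. (of_nat (path_cost tdist (last ps # X))
            + Ch H (ks @ ?K) (ps @ X) L) \<partial>measure_pmf (hydra_run H ks ps ?K))"
      by (simp only: nn_int_const_add Ch_def)
    finally show ?thesis by simp
  qed
  finally show ?thesis .
qed

lemma cost_bound:
  assumes H: "valid_hydra_alg k H" and k: "k \<ge> 1"
    and F: "\<And>fv I. (\<forall>r \<in> set I. gks_point k n r) \<Longrightarrow> Ch H [] [[]] (phk k fv [] I) \<le> ennreal R"
  shows "Inv k n (b, fv, ks, ps) \<Longrightarrow> (\<forall>r \<in> set I. gks_point k n r) \<Longrightarrow>
     Cg k H (b, fv, ks, ps) I \<le> Ch H ks ps (phk k fv ks I) + ennreal R * of_nat (nres k fv ks I)"
proof (induction I arbitrary: b fv ks ps)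
  case Nil then show ?case by (simp add: Cg_Nil)
next
  case (Cons r I)
  have r: "gks_point k n r" and Ip: "\<forall>r \<in> set I. gks_point k n r" using Cons.prems by auto
  show ?case
  proof (cases "ends k fv ks r")
    case False
    have "Cg k H (b, fv, ks, ps) (r # I) =
      (\<integral>\<^sup>+ s'. of_nat (gks_dist k (cfg k b fv (last ps)) (outs k s')) + Cg k H s' I
            \<partial>measure_pmf (stepc k H (b, fv, ks, ps) r))"
      using False by (simp add: Cg_Cons pstep_simp)
    also have "\<dots> \<le> Ch H ks ps (batch k fv ks r @ phk k (upd k fv (batch k fv ks r) r) (ks @ batch k fv ks r) I)
        + ennreal R * of_nat (nres k (upd k fv (batch k fv ks r) r) (ks @ batch k fv ks r) I)"
    proof (rule one_step[OF H Cons.prems(1) r False])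
      fix X assume X: "X \<in> set_pmf (hydra_run H ks ps (batch k fv ks r))"
      have "(b, upd k fv (batch k fv ks r) r, ks @ batch k fv ks r, ps @ X) \<in> set_pmf (stepc k H (b, fv, ks, ps) r)"
        unfolding stepc_simp set_map_pmf by (rule image_eqI[OF _ X]) simp
      then have "Inv k n (b, upd k fv (batch k fv ks r) r, ks @ batch k fv ks r, ps @ X)"
        using stepc_inv[OF H Cons.prems(1) r False] by blast
      then show "Cg k H (b, upd k fv (batch k fv ks r) r, ks @ batch k fv ks r, ps @ X) I
         \<le> Ch H (ks @ batch k fv ks r) (ps @ X) (phk k (upd k fv (batch k fv ks r) r) (ks @ batch k fv ks r) I)
           + ennreal R * of_nat (nres k (upd k fv (batch k fv ks r) r) (ks @ batch k fv ks r) I)"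
        using Cons.IH Ip by blast
    qed
    finally show ?thesis using False by simp
  next
    case True
    let ?b = "cfg k b fv (last ps)"
    have S: "sinv k n fv ks" using Cons.prems by simp
    have "last ps \<in> created k ks" using Cons.prems alive_created S by (auto simp: sinv_def)
    then have bp: "gks_point k n ?b" using cfg_point[OF S] Cons.prems by simp
    have I0: "Inv k n (?b, fv, [], [[]])" using sinv_fresh bp by simp
    have ne0: "\<not> ends k fv [] r" by (rule not_ends_fresh[OF k])
    have bb: "cfg k ?b fv (last [[]]) = ?b" using bp by (simp add: cfg_Nil gks_point_def)
    have "Cg k H (b, fv, ks, ps) (r # I) =
      (\<integral>\<^sup>+ s'. of_nat (gks_dist k (cfg k ?b fv (last [[]])) (outs k s')) + Cg k H s' I
            \<partial>measure_pmf (stepc k H (?b, fv, [], [[]]) r))"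
      using True bb by (simp add: Cg_Cons pstep_simp)
    also have "\<dots> \<le> Ch H [] [[]] (batch k fv [] r @ phk k (upd k fv (batch k fv [] r) r) ([] @ batch k fv [] r) I)
        + ennreal R * of_nat (nres k (upd k fv (batch k fv [] r) r) ([] @ batch k fv [] r) I)"
    proof (rule one_step[OF H I0 r ne0])
      fix X assume X: "X \<in> set_pmf (hydra_run H [] [[]] (batch k fv [] r))"
      have "(?b, upd k fv (batch k fv [] r) r, [] @ batch k fv [] r, [[]] @ X) \<in> set_pmf (stepc k H (?b, fv, [], [[]]) r)"
        unfolding stepc_simp set_map_pmf by (rule image_eqI[OF _ X]) simp
      then have "Inv k n (?b, upd k fv (batch k fv [] r) r, [] @ batch k fv [] r, [[]] @ X)"
        using stepc_inv[OF H I0 r ne0] by blast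
      then show "Cg k H (?b, upd k fv (batch k fv [] r) r, [] @ batch k fv [] r, [[]] @ X) I
         \<le> Ch H ([] @ batch k fv [] r) ([[]] @ X) (phk k (upd k fv (batch k fv [] r) r) ([] @ batch k fv [] r) I)
           + ennreal R * of_nat (nres k (upd k fv (batch k fv [] r) r) ([] @ batch k fv [] r) I)"
        using Cons.IH Ip by blast
    qed
    also have "batch k fv [] r @ phk k (upd k fv (batch k fv [] r) r) ([] @ batch k fv [] r) I = phk k fv [] (r # I)"
      using ne0 by simp
    also have "Ch H [] [[]] (phk k fv [] (r # I)) \<le> ennreal R" using F Cons.prems(2) by blast
    finally have "Cg k H (b, fv, ks, ps) (r # I) \<le>
       ennreal R + ennreal R * of_nat (nres k (upd k fv (batch k fv [] r) r) ([] @ batch k fv [] r) I)"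
      by (simp add: add_right_mono)
    also have "\<dots> = ennreal R * of_nat (nres k fv ks (r # I))"
      using True by (simp add: distrib_left)
    also have "\<dots> \<le> Ch H ks ps (phk k fv ks (r # I)) + ennreal R * of_nat (nres k fv ks (r # I))"
      by simp
    finally show ?thesis .
  qed
qed


lemma phk_valid:
  assumes k: "k \<ge> 1"
  shows "sinv k n fv ks \<Longrightarrow> (\<forall>r \<in> set I. gks_point k n r) \<Longrightarrow>
    valid_kills k (ks @ phk k fv ks I) \<and> alive_after k (ks @ phk k fv ks I) \<noteq> {}"
proof (induction I arbitrary: fv ks)
  case Nil then show ?case by (simp add: sinv_def)
next
  case (Cons r I)
  show ?case
  proof (cases "ends k fv ks r")
    case True then show ?thesis using Cons.prems by (simp add: sinv_def)
  next
    case False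
    have "sinv k n (upd k fv (batch k fv ks r) r) (ks @ batch k fv ks r)"
      using sstep_inv[OF Cons.prems(1) _ False] Cons.prems(2) by simp
    then show ?thesis using Cons.IH[of "upd k fv (batch k fv ks r) r" "ks @ batch k fv ks r"] Cons.prems False
      by simp
  qed
qed

lemma tdist_le: "u \<in> ftree k \<Longrightarrow> v \<in> ftree k \<Longrightarrow> tdist u v \<le> 2 * k"
  by (auto simp: tdist_def ftree_def)

lemma pc_bound: "set (a # Z) \<subseteq> ftree k \<Longrightarrow> path_cost tdist (a # Z) \<le> 2 * k * length Z"
proof (induction Z arbitrary: a)
  case Nil then show ?case by simp
next
  case (Cons b Z)
  have "path_cost tdist (a # b # Z) = tdist a b + path_cost tdist (b # Z)" by (rule path_cost_Cons_Cons)
  also have "\<dots> \<le> 2 * k + 2 * k * length Z" using Cons tdist_le[of a k b] by (intro add_mono) auto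
  finally show ?case by simp
qed

lemma pcg_bound: "path_cost (gks_dist k) (a # Z) \<le> k * length Z"
proof (induction Z arbitrary: a)
  case Nil then show ?case by simp
next
  case (Cons b Z)
  have "path_cost (gks_dist k) (a # b # Z) = gks_dist k a b + path_cost (gks_dist k) (b # Z)" by (rule path_cost_Cons_Cons)
  also have "\<dots> \<le> k + k * length Z" using Cons gks_dist_le_k by (intro add_mono) auto
  finally show ?case by simp
qed

lemma full_alive:
  assumes "hydra_adversary k M"
  shows "valid_kills k M \<and> alive_after k M \<noteq> {}"
proof -
  have V: "valid_kills k M" and L: "length M = card (ftree k) - 1" using assms by (auto simp: hydra_adversary_def)
  have "alive_after k M \<noteq> {}"
  proof
    assume "alive_after k M = {}"
    then have "ftree k \<subseteq> set M" using alive_empty_all V by blast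
    then have "card (ftree k) \<le> card (set M)" using card_mono by blast
    also have "\<dots> \<le> length M" by (rule card_length)
    finally have "card (ftree k) \<le> card (ftree k) - 1" using L by simp
    moreover have "card (ftree k) > 0" using finite_ftree Nil_ftree card_gt_0_iff by blast
    ultimately show False by simp
  qed
  then show ?thesis using V by simp
qed

lemma hydra_full_nn:
  assumes H: "valid_hydra_alg k H" and M: "hydra_adversary k M"
  shows "(\<integral>\<^sup>+ Z. of_nat (path_cost tdist ([] # Z)) \<partial>measure_pmf (hydra_run H [] [[]] M)) = ennreal (hydra_exp_cost H M)"
proof -
  have VA: "valid_kills k M" "alive_after k M \<noteq> {}" using full_alive[OF M] by auto
  have bnd: "\<And>Z. Z \<in> set_pmf (hydra_run H [] [[]] M) \<Longrightarrow> real (path_cost tdist ([] # Z)) \<le> real (2 * k * length M)"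
  proof -
    fix Z assume Z: "Z \<in> set_pmf (hydra_run H [] [[]] M)"
    have "set Z \<subseteq> created k ([] @ M)"
      using hydra_run_support[OF H, of "[]" M "[[]]" Z] VA Z by simp
    then have "set ([] # Z) \<subseteq> ftree k" using created_ftree[OF VA(1)] by auto
    then have "path_cost tdist ([] # Z) \<le> 2 * k * length Z" by (rule pc_bound)
    then have "path_cost tdist ([] # Z) \<le> 2 * k * length M" using hydra_run_length[OF Z] by simp
    then show "real (path_cost tdist ([] # Z)) \<le> real (2 * k * length M)" by (simp only: of_nat_le_iff)
  qed
  have int: "integrable (measure_pmf (hydra_run H [] [[]] M)) (\<lambda>Z. real (path_cost tdist ([] # Z)))"
    by (rule measure_pmf.integrable_const_bound[where B="real (2 * k * length M)"])
       (use bnd in \<open>auto simp: AE_measure_pmf_iff\<close>)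
  have "(\<integral>\<^sup>+ Z. ennreal (real (path_cost tdist ([] # Z))) \<partial>measure_pmf (hydra_run H [] [[]] M))
        = ennreal (hydra_exp_cost H M)"
    unfolding hydra_exp_cost_def by (rule nn_integral_eq_integral[OF int]) simp
  then show ?thesis by (simp add: ennreal_of_nat_eq_real_of_nat)
qed

lemma fact_F:
  assumes H: "valid_hydra_alg k H" and k: "k \<ge> 1"
    and hyp: "\<forall>ks. hydra_adversary k ks \<longrightarrow> hydra_exp_cost H ks \<le> R"
    and I: "\<forall>r \<in> set I. gks_point k n r"
  shows "Ch H [] [[]] (phk k fv [] I) \<le> ennreal R"
proof -
  let ?L = "phk k fv [] I"
  have VA: "valid_kills k ?L" "alive_after k ?L \<noteq> {}" using phk_valid[OF k sinv_fresh I] by auto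
  have "length ?L \<le> card (ftree k) - 1" using length_kills_le VA by blast
  then obtain M where M: "hydra_adversary k (?L @ M)" using extend_adversary VA by blast
  have "Ch H [] [[]] ?L = (\<integral>\<^sup>+ X. of_nat (path_cost tdist ([] # X)) \<partial>measure_pmf (map_pmf (take (length ?L)) (hydra_run H [] [[]] (?L @ M))))"
    by (simp add: Ch_def hydra_run_take)
  also have "\<dots> = (\<integral>\<^sup>+ Z. of_nat (path_cost tdist ([] # take (length ?L) Z)) \<partial>measure_pmf (hydra_run H [] [[]] (?L @ M)))"
    by simp
  also have "\<dots> \<le> (\<integral>\<^sup>+ Z. of_nat (path_cost tdist ([] # Z)) \<partial>measure_pmf (hydra_run H [] [[]] (?L @ M)))"
    by (rule nn_int_mono_pmf) (simp add: path_cost_take_le)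
  also have "\<dots> = ennreal (hydra_exp_cost H (?L @ M))" by (rule hydra_full_nn[OF H M])
  also have "\<dots> \<le> ennreal R" using hyp M by (simp add: ennreal_leI)
  finally show ?thesis .
qed

lemma gd_zero: "gks_dist k c c' = 0 \<Longrightarrow> i < k \<Longrightarrow> c ! i = c' ! i"
  by (auto simp: gks_dist_def)

lemma covered_congr:
  assumes "sinv k n fv ks" "covered k fv ks c" "\<And>i. i < k \<Longrightarrow> c ! i = c' ! i"
  shows "covered k fv ks c'"
proof -
  have V: "valid_kills k ks" using assms by (simp add: sinv_def)
  obtain w where w: "w \<in> alive_after k ks" "\<forall>i \<in> set (fcoords k w). c ! i = fv w i"
    using assms by (auto simp: covered_def)
  have "w \<in> ftree k" using w alive_created[OF V] created_ftree[OF V] by blast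
  then have "set (fcoords k w) \<subseteq> {..<k}" using fcoords_ftree by blast
  then have "\<forall>i \<in> set (fcoords k w). c' ! i = fv w i" using w assms(3) by (metis lessThan_iff subsetD)
  then show ?thesis using w by (auto simp: covered_def)
qed

lemma serves_congr: "gks_serves k c r \<Longrightarrow> (\<And>i. i < k \<Longrightarrow> c ! i = c' ! i) \<Longrightarrow> gks_serves k c' r"
  by (auto simp: gks_serves_def)

lemma opt_lb:
  assumes k: "k \<ge> 1"
  shows "sinv k n fv ks \<Longrightarrow> (\<forall>r \<in> set I. gks_point k n r) \<Longrightarrow> length cs = length I \<Longrightarrow>
    (\<forall>j < length I. gks_serves k (cs ! j) (I ! j)) \<Longrightarrow>
    nres k fv ks I \<le> path_cost (gks_dist k) (cp # cs) + (if covered k fv ks cp then 0 else 1)"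
proof (induction I arbitrary: fv ks cs cp)
  case Nil then show ?case by simp
next
  case (Cons r I)
  obtain c1 cs' where cs: "cs = c1 # cs'" using Cons.prems(3) by (cases cs) auto
  have r: "gks_point k n r" using Cons.prems by simp
  have sv: "gks_serves k c1 r" using Cons.prems(4) cs by (auto dest: spec[of _ 0])
  have sv': "\<forall>j < length I. gks_serves k (cs' ! j) (I ! j)" using Cons.prems(4) cs by auto
  have len': "length cs' = length I" using Cons.prems(3) cs by simp
  have Ip: "\<forall>r \<in> set I. gks_point k n r" using Cons.prems by simp
  have pc: "path_cost (gks_dist k) (cp # cs) = gks_dist k cp c1 + path_cost (gks_dist k) (c1 # cs')"
    using cs path_cost_Cons_Cons by simp
  show ?case
  proof (cases "ends k fv ks r")
    case True
    let ?fv = "upd k fv (batch k fv [] r) r" and ?ks = "[] @ batch k fv [] r"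
    have S0: "sinv k n ?fv ?ks" using sstep_inv[OF sinv_fresh r not_ends_fresh[OF k]] .
    have C0: "covered k ?fv ?ks c1" using covered_step[OF sinv_fresh covered_fresh sv] .
    have IH: "nres k ?fv ?ks I \<le> path_cost (gks_dist k) (c1 # cs')"
      using Cons.IH[OF S0 Ip len' sv', of c1] C0 by simp
    have one: "1 \<le> gks_dist k cp c1 + (if covered k fv ks cp then 0 else 1)"
    proof (cases "gks_dist k cp c1 = 0 \<and> covered k fv ks cp")
      case True
      then have "covered k fv ks c1" using covered_congr[OF Cons.prems(1)] gd_zero by blast
      then have "\<not> ends k fv ks r" using covered_not_ends[OF Cons.prems(1) _ sv] by blast
      then show ?thesis using \<open>ends k fv ks r\<close> by simp
    next
      case False then show ?thesis by auto
    qed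
    show ?thesis using True IH one pc by simp
  next
    case False
    let ?fv = "upd k fv (batch k fv ks r) r" and ?ks = "ks @ batch k fv ks r"
    have S1: "sinv k n ?fv ?ks" using sstep_inv[OF Cons.prems(1) r False] .
    have IH: "nres k ?fv ?ks I \<le> path_cost (gks_dist k) (c1 # cs') + (if covered k ?fv ?ks c1 then 0 else 1)"
      using Cons.IH[OF S1 Ip len' sv', of c1] by simp
    have "(if covered k ?fv ?ks c1 then 0 else 1) \<le> gks_dist k cp c1 + (if covered k fv ks cp then 0 else 1)"
    proof (cases "gks_dist k cp c1 = 0 \<and> covered k fv ks cp")
      case True
      then have "covered k fv ks c1" using covered_congr[OF Cons.prems(1)] gd_zero by blast
      then have "covered k ?fv ?ks c1" using covered_step[OF Cons.prems(1) _ sv] by blast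
      then show ?thesis by simp
    next
      case False then show ?thesis by auto
    qed
    then show ?thesis using False IH pc by simp
  qed
qed

theorem theorem6:
  fixes k :: nat and R :: real
  assumes "k \<ge> 1"
    and "\<exists>H. valid_hydra_alg k H \<and> (\<forall>ks. hydra_adversary k ks \<longrightarrow> hydra_exp_cost H ks \<le> R)"
  shows "\<forall>(n :: nat \<Rightarrow> nat) (c0 :: nat list).
           (\<forall>i < k. n i \<ge> 2) \<and> gks_point k n c0 \<longrightarrow>
           (\<exists>A. valid_gks_alg k n A \<and> gks_competitive k n c0 A (R + 1))"
proof (intro allI impI)
  fix n :: "nat \<Rightarrow> nat" and c0 :: "nat list"
  assume nc: "(\<forall>i < k. n i \<ge> 2) \<and> gks_point k n c0"
  have k: "k \<ge> 1" using assms by simp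
  obtain H where H: "valid_hydra_alg k H" and hyp: "\<forall>ks. hydra_adversary k ks \<longrightarrow> hydra_exp_cost H ks \<le> R"
    using assms by blast
  have c0: "gks_point k n c0" using nc by simp
  have R0: "R \<ge> 0"
  proof -
    obtain M where M: "hydra_adversary k ([] @ M)" using extend_adversary[of k "[]"] by fastforce
    have "0 \<le> hydra_exp_cost H M" unfolding hydra_exp_cost_def by (rule integral_nonneg_AE) simp
    then show ?thesis using hyp M by force
  qed
  define fv0 :: "nat list \<Rightarrow> nat \<Rightarrow> nat" where "fv0 = (\<lambda>_ _. 0)"
  define s0 :: st where "s0 = (c0, fv0, [], [[]])"
  define A where "A = Aval k n (pstep k H) (outs k) s0"
  have I0: "Inv k n s0" using sinv_fresh c0 by (simp add: s0_def)
  have out0: "outs k s0 = c0" using c0 by (simp add: s0_def cfg_Nil gks_point_def)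
  have inv: "\<And>s r s'. Inv k n s \<Longrightarrow> gks_point k n r \<Longrightarrow> s' \<in> set_pmf (pstep k H s r) \<Longrightarrow>
                  Inv k n s' \<and> gks_point k n (outs k s') \<and> gks_serves k (outs k s') r"
    using pstep_inv[OF H k] by blast
  have "valid_gks_alg k n A" unfolding A_def by (rule Aval_valid[OF k])
  moreover have "gks_competitive k n c0 A (R + 1)"
    unfolding gks_competitive_def
  proof (intro exI[of _ R] allI impI)
    fix I assume Ip: "\<forall>r \<in> set I. gks_point k n r"
    have run: "gks_run A [] [c0] I = orun (pstep k H) (outs k) s0 I"
      unfolding A_def by (rule Aval_run0[where P="Inv k n" and st="pstep k H" and out="outs k", OF inv I0 Ip])
    let ?f = "\<lambda>cs. real (path_cost (gks_dist k) (c0 # cs))"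
    have int: "integrable (measure_pmf (orun (pstep k H) (outs k) s0 I)) ?f"
      by (rule measure_pmf.integrable_const_bound[where B="real (k * length I)"])
         (auto simp: AE_measure_pmf_iff simp del: of_nat_mult intro!: iffD2[OF of_nat_le_iff]
               dest!: orun_length intro: order.trans[OF pcg_bound])
    have "ennreal (gks_exp_cost k A c0 I) = (\<integral>\<^sup>+ cs. ennreal (?f cs) \<partial>measure_pmf (orun (pstep k H) (outs k) s0 I))"
      unfolding gks_exp_cost_def run by (rule nn_integral_eq_integral[OF int, symmetric]) simp
    also have "\<dots> = Cg k H s0 I"
      by (simp add: Cg_def out0 ennreal_of_nat_eq_real_of_nat)
    also have "\<dots> \<le> Ch H [] [[]] (phk k fv0 [] I) + ennreal R * of_nat (nres k fv0 [] I)"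
      unfolding s0_def by (rule cost_bound[OF H k fact_F[OF H k hyp]]) (use I0 Ip in \<open>simp_all add: s0_def\<close>)
    also have "\<dots> \<le> ennreal R + ennreal R * of_nat (nres k fv0 [] I)"
      using fact_F[OF H k hyp Ip] by (simp add: add_right_mono)
    also have "\<dots> = ennreal (R + R * real (nres k fv0 [] I))"
      using R0 by (simp add: ennreal_plus ennreal_mult ennreal_of_nat_eq_real_of_nat)
    finally have E0: "ennreal (gks_exp_cost k A c0 I) \<le> ennreal (R + R * real (nres k fv0 [] I))" .
    have "0 \<le> R + R * real (nres k fv0 [] I)" using R0 by simp
    then have E: "gks_exp_cost k A c0 I \<le> R + R * real (nres k fv0 [] I)"
      using E0 ennreal_le_iff by blast
    let ?S = "{cs. length cs = length I \<and> (\<forall>j < length I. gks_point k n (cs ! j) \<and> gks_serves k (cs ! j) (I ! j))}"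
    have "I \<in> ?S"
      using Ip k by (auto simp: gks_serves_def intro!: exI[of _ 0])
    then have Sne: "?S \<noteq> {}" by blast
    have "nres k fv0 [] I \<le> gks_opt k n c0 I"
      unfolding gks_opt_def
    proof (rule cINF_greatest[OF Sne])
      fix cs assume cs: "cs \<in> ?S"
      show "nres k fv0 [] I \<le> path_cost (gks_dist k) (c0 # cs)"
        using opt_lb[OF k sinv_fresh Ip, of cs fv0 c0] cs covered_fresh by simp
    qed
    then have "R * real (nres k fv0 [] I) \<le> R * real (gks_opt k n c0 I)"
      using R0 by (simp add: mult_left_mono)
    also have "\<dots> \<le> (R + 1) * real (gks_opt k n c0 I)" by (simp add: distrib_right)
    finally show "gks_exp_cost k A c0 I \<le> (R + 1) * real (gks_opt k n c0 I) + R"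
      using E by simp
  qed
  ultimately show "\<exists>A. valid_gks_alg k n A \<and> gks_competitive k n c0 A (R + 1)" by blast
qed


end
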